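(* For any two predicates $P,Q$ and any concrete program $S$, if $\models_{\mathrm{tot}}\{P\}\,S\,\{Q\}$, then $\{P\}\,\square\,\{Q\}\hookrightarrow_{\mathrm{tot}}^{*}S$.
   Context: Quantum setting. There is a finite set $\mathrm{qVars}$ of quantum variables; each $q$ has Hilbert space $\mathcal H_q=\mathbb C^{\Sigma_q}$ ($\Sigma_q$ finite) with standard orthonormal basis $\{|x\rangle\}_{x\in\Sigma_q}$. For a set $\vec q\subseteq\mathrm{qVars}$, $\mathcal H_{\vec q}=\bigotimes_{q\in\vec q}\mathcal H_q$ with standard basis labelled by $\Sigma_{\vec q}=\prod_{q\in\vec q}\Sigma_q$, and $\mathcal H=\mathcal H_{\mathrm{qVars}}$. For an operator $A$ on $\mathcal H_{\vec q}$, $A_{\vec q}=A\otimes I$ on $\mathcal H$. $\preceq$ is the Löwner order. A partial state is a positive semidefinite (PSD) $\rho$ on $\mathcal H$ with $\operatorname{tr}\rho\le1$. A predicate is an operator $P$ on $\mathcal H$ with $0\preceq P\preceq I$; "$P\Rightarrow Q$" means $P\preceq Q$. A measurement on $\vec q$ is a family $\vec M=\{M_\omega\}_{\omega\in\Omega}$ ($\Omega$ finite) of PSD operators on $\mathcal H_{\vec q}$ with $\sum_\omega M_\omega=I$; write $\mathcal M_{\omega}(X)=\sqrt{M_{\omega,\vec q}}\,X\,\sqrt{M_{\omega,\vec q}}$. A binary measurement is given by an operator $B$ on $\mathcal H_{\vec q}$ with $0\preceq B\preceq I$, and $\mathcal B_{0,\vec q}(X)=\sqrt{(I-B)_{\vec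 q}}\,X\sqrt{(I-B)_{\vec q}}$, $\mathcal B_{1,\vec q}(X)=\sqrt{B_{\vec q}}\,X\sqrt{B_{\vec q}}$. Quantum while language: $S::=\mathbf{skip}\mid \vec q:=|0\rangle\mid \vec q\mathrel{*}=U\mid S_1;S_2\mid \mathbf{repeat}\ N\ \mathbf{do}\ S\mid \mathbf{case}\ \vec M[\vec q]\ \mathbf{of}\ \{\omega: S_\omega\}_{\omega\in\Omega}\mid \mathbf{while}\ B[\vec q]\ \mathbf{do}\ S$, with $U$ unitary on $\mathcal H_{\vec q}$, $N\in\mathbb N$. Denotational semantics $[\![S]\!]$ on partial states: $[\![\mathbf{skip}]\!](\rho)=\rho$; $[\![\vec q:=|0\rangle]\!](\rho)=\sum_{x\in\Sigma_{\vec q}}|0\rangle\langle x|_{\vec q}\,\rho\,|x\rangle\langle0|_{\vec q}$; $[\![\vec q\mathrel{*}=U]\!](\rho)=U_{\vec q}\rho U_{\vec q}^\dagger$; $[\![S_1;S_2]\!]=[\![S_2]\!]\circ[\![S_1]\!]$; $[\![\mathbf{repeat}\ N\ \mathbf{do}\ S]\!]=[\![S]\!]^N$; $[\![\mathbf{case}\ldots]\!](\rho)=\sum_\omega[\![S_\omega]\!](\mathcal M_\omega(\rho))$; $[\![\mathbf{while}\ B[\vec q]\ \mathbf{do}\ S]\!](\rho)=\sum_{k\ge0}(\mathcal B_{0,\vec q}\circ([\![S]\!]\circ\mathcal B_{1,\vec q})^k)(\rho)$. Hoare triples: $\models_{\mathrm{tot}}\{P\}S\{Q\}$ iff $\operatorname{tr}(P\rho)\le\operatorname{tr}(Q[\![S]\!](\rho))$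 for all partial states $\rho$; $\models_{\mathrm{par}}\{P\}S\{Q\}$ iff $\operatorname{tr}(P\rho)\le\operatorname{tr}(Q[\![S]\!](\rho))+\operatorname{tr}\rho-\operatorname{tr}[\![S]\!](\rho)$ for all partial states $\rho$. Syntactic sugar: $\mathbf{if}\ B[\vec q]\ \mathbf{then}\ S_1\ \mathbf{else}\ S_0$ abbreviates $\mathbf{case}\ \{1:B,0:I-B\}[\vec q]\ \mathbf{of}\ \{1:S_1,0:S_0\}$; omitting else means $S_0=\mathbf{skip}$. Programs with holes. The grammar is extended by holes $\{P\}\,\square\,\{Q\}$ ($P,Q$ predicates); more generally a hole may carry a family of specifications $\{P_\lambda\}\,\square\,\{Q_\lambda\}$, $\lambda\in\Lambda$ (written e.g. $\{P,P'\}\square\{Q,Q'\}$ for two). A program without holes is concrete. A refinement rule applied to a hole with a family must have its side conditions satisfied for every $\lambda$; the predicates it introduces may depend on $\lambda$, but the syntactic program produced (variables, unitaries, measurements, $N$, $B$) is the same for all $\lambda$; holes it creates carry the families indexed by $\lambda$ together with any newly introduced index. Refinement for partial correctness $\hookrightarrow_{\mathrm{par}}$ (for predicates $P,Q$): (H.skip) $\{P\}\square\{Q\}\hookrightarrow\mathbf{skip}$ if $P\Rightarrow Q$; (H.init) $\{P\}\square\{Q\}\hookrightarrow\vec q:=|0\rangle$ if $P\Rightarrow\sum_{x\in\Sigma_{\vec q}}|x\rangle\langle0|_{\vec q}Q|0\rangle\langle x|_{\vec q}$; (H.unit) $\{P\}\square\{Q\}\hookrightarrow\vec q\mathrel{*}=U$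 if $P\Rightarrow U_{\vec q}^\dagger QU_{\vec q}$; (H.seq) $\{P\}\square\{Q\}\hookrightarrow\{P\}\square\{R\};\{R\}\square\{Q\}$ for any predicate $R$; (HP.split) $\{P\}\square\{Q\}\hookrightarrow\{P_\gamma\}\square\{Q_\gamma\}$ ($\gamma\in\Gamma$) if $P\Rightarrow\sum_\gamma p_\gamma P_\gamma$ and $\sum_\gamma p_\gamma Q_\gamma\Rightarrow Q$ for a probability distribution $(p_\gamma)$; (H.repeat) $\{P\}\square\{Q\}\hookrightarrow\mathbf{repeat}\ N\ \mathbf{do}\ \{R_j\}\square\{R_{j+1}\}$ (family over $j\in\{0,\dots,N-1\}$) for predicates $R_0,\dots,R_N$ with $P\Rightarrow R_0$, $R_N\Rightarrow Q$; (H.case) $\{P\}\square\{Q\}\hookrightarrow\mathbf{case}\ \vec M[\vec q]\ \mathbf{of}\ \{\omega:\{P_\omega\}\square\{Q\}\}_{\omega}$ if $P\Rightarrow\sum_\omega\mathcal M_\omega(P_\omega)$; (HP.while) $\{P\}\square\{Q\}\hookrightarrow\mathbf{while}\ B[\vec q]\ \mathbf{do}\ \{R\}\square\{\mathcal B_{0,\vec q}(Q)+\mathcal B_{1,\vec q}(R)\}$ for a predicate $R$ with $P\Rightarrow\mathcal B_{0,\vec q}(Q)+\mathcal B_{1,\vec q}(R)$. Composite rules: (C.seqL/C.seqR/C.repeat/C.case/C.while) if $S'\hookrightarrow S$ then replacing one occurrence of $S'$ as the left or right component of a sequence, the body of a repeat, one branch of a case, or the body of a while by $S$ is a refinement step.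 Refinement for total correctness $\hookrightarrow_{\mathrm{tot}}$ uses all (H.* ) and (C.* ) rules above but replaces (HP.while) by (HT.while): $\{P\}\square\{Q\}\hookrightarrow\mathbf{while}\ B[\vec q]\ \mathbf{do}\ \{R_{n+1}\}\square\{\mathcal B_{0,\vec q}(Q)+\mathcal B_{1,\vec q}(R_n)\}$ (family over $n\in\mathbb N$) for predicates $(R_n)_{n\in\mathbb N}$ with $R_0=0$, $R_n\Rightarrow R_{n+1}$, whose limit $R=\lim_n R_n$ satisfies $P\Rightarrow\mathcal B_{0,\vec q}(Q)+\mathcal B_{1,\vec q}(R)$; and replaces (HP.split) by (HT.split), identical except that $(p_\gamma)$ need only be nonnegative reals. $\hookrightarrow^k$ denotes $k$ steps and $\hookrightarrow^*$ the reflexive-transitive closure. *)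

theory Defs
  imports Complex_Main
begin

text \<open>The set qVars of quantum variables is the finite type 'v (qVars = UNIV).
  Each variable q has a finite set of classical values Sg q (a subset of the finite type 'a),
  containing the value 0 (used for the basis state |0>).
  A basis vector of H_qs (qs a set of variables) is represented by a memory m :: 'v => 'a with
  m q in Sg q for q in qs and m q = 0 for q not in qs.  Operators are matrices indexed by memories;
  only entries indexed by basis memories are meaningful.\<close>

type_synonym ('v,'a) op = "('v \<Rightarrow> 'a) \<Rightarrow> ('v \<Rightarrow> 'a) \<Rightarrow> complex"

definition basis :: "('v \<Rightarrow> 'a set) \<Rightarrow> 'v set \<Rightarrow> ('v \<Rightarrow> 'a::zero) set" where
  "basis Sg qs = {m. \<forall>q. (q \<in> qs \<longrightarrow> m q \<in> Sg q) \<and> (q \<notin> qs \<longrightarrow> m q = 0)}"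

definition opmult :: "('v \<Rightarrow> 'a set) \<Rightarrow> 'v set \<Rightarrow> ('v,'a::zero) op \<Rightarrow> ('v,'a) op \<Rightarrow> ('v,'a) op" where
  "opmult Sg qs A B = (\<lambda>x y. \<Sum>z\<in>basis Sg qs. A x z * B z y)"

definition adj :: "('v,'a) op \<Rightarrow> ('v,'a) op" where
  "adj A = (\<lambda>x y. cnj (A y x))"

definition opId :: "('v,'a) op" where
  "opId = (\<lambda>x y. if x = y then 1 else 0)"

definition opzero :: "('v,'a) op" where
  "opzero = (\<lambda>x y. 0)"

definition opdiff :: "('v,'a) op \<Rightarrow> ('v,'a) op \<Rightarrow> ('v,'a) op" where
  "opdiff A B = (\<lambda>x y. A x y - B x y)"

definition opadd :: "('v,'a) op \<Rightarrow> ('v,'a) op \<Rightarrow> ('v,'a) op" where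
  "opadd A B = (\<lambda>x y. A x y + B x y)"

definition psd :: "('v \<Rightarrow> 'a set) \<Rightarrow> 'v set \<Rightarrow> ('v,'a::zero) op \<Rightarrow> bool" where
  "psd Sg qs A \<longleftrightarrow> (\<forall>\<psi> :: ('v \<Rightarrow> 'a) \<Rightarrow> complex.
     (let v = (\<Sum>x\<in>basis Sg qs. \<Sum>y\<in>basis Sg qs. cnj (\<psi> x) * A x y * \<psi> y)
      in Im v = 0 \<and> 0 \<le> Re v))"

definition loewner :: "('v \<Rightarrow> 'a set) \<Rightarrow> 'v set \<Rightarrow> ('v,'a::zero) op \<Rightarrow> ('v,'a) op \<Rightarrow> bool" where
  "loewner Sg qs A B \<longleftrightarrow> psd Sg qs (opdiff B A)"

definition is_pred :: "('v \<Rightarrow> 'a set) \<Rightarrow> ('v,'a::zero) op \<Rightarrow> bool" where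
  "is_pred Sg P \<longleftrightarrow> loewner Sg UNIV opzero P \<and> loewner Sg UNIV P opId"

definition supported :: "('v \<Rightarrow> 'a set) \<Rightarrow> 'v set \<Rightarrow> ('v,'a::zero) op \<Rightarrow> bool" where
  "supported Sg qs A \<longleftrightarrow> (\<forall>x y. x \<notin> basis Sg qs \<or> y \<notin> basis Sg qs \<longrightarrow> A x y = 0)"

definition opsqrt :: "('v \<Rightarrow> 'a set) \<Rightarrow> 'v set \<Rightarrow> ('v,'a::zero) op \<Rightarrow> ('v,'a) op" where
  "opsqrt Sg qs A = (THE S. supported Sg qs S \<and> psd Sg qs S \<and>
      (\<forall>x\<in>basis Sg qs. \<forall>y\<in>basis Sg qs. opmult Sg qs S S x y = A x y))"

definition restr :: "'v set \<Rightarrow> ('v \<Rightarrow> 'a::zero) \<Rightarrow> ('v \<Rightarrow> 'a)" where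
  "restr qs m = (\<lambda>q. if q \<in> qs then m q else 0)"

text \<open>A_qs = A \<otimes> I on H.\<close>
definition lift :: "'v set \<Rightarrow> ('v,'a::zero) op \<Rightarrow> ('v,'a) op" where
  "lift qs A = (\<lambda>x y. if (\<forall>q. q \<notin> qs \<longrightarrow> x q = y q) then A (restr qs x) (restr qs y) else 0)"

definition sandwich :: "('v \<Rightarrow> 'a set) \<Rightarrow> ('v,'a::zero) op \<Rightarrow> ('v,'a) op \<Rightarrow> ('v,'a) op" where
  "sandwich Sg K X = opmult Sg UNIV (opmult Sg UNIV K X) (adj K)"

definition trace :: "('v \<Rightarrow> 'a set) \<Rightarrow> ('v,'a::zero) op \<Rightarrow> complex" where
  "trace Sg A = (\<Sum>x\<in>basis Sg UNIV. A x x)"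

definition pstate :: "('v \<Rightarrow> 'a set) \<Rightarrow> ('v,'a::zero) op \<Rightarrow> bool" where
  "pstate Sg \<rho> \<longleftrightarrow> psd Sg UNIV \<rho> \<and> Re (trace Sg \<rho>) \<le> 1"

definition ketbra0 :: "('v \<Rightarrow> 'a::zero) \<Rightarrow> ('v,'a) op" where
  "ketbra0 x = (\<lambda>a b. if a = (\<lambda>q. 0) \<and> b = x then 1 else 0)"

definition meas_map :: "('v \<Rightarrow> 'a set) \<Rightarrow> 'v set \<Rightarrow> ('v,'a::zero) op \<Rightarrow> ('v,'a) op \<Rightarrow> ('v,'a) op" where
  "meas_map Sg qs M = sandwich Sg (lift qs (opsqrt Sg qs M))"

definition unitary :: "('v \<Rightarrow> 'a set) \<Rightarrow> 'v set \<Rightarrow> ('v,'a::zero) op \<Rightarrow> bool" where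
  "unitary Sg qs U \<longleftrightarrow> (\<forall>x\<in>basis Sg qs. \<forall>y\<in>basis Sg qs.
      opmult Sg qs U (adj U) x y = opId x y \<and> opmult Sg qs (adj U) U x y = opId x y)"

text \<open>A measurement on qs, its outcomes Omega being the positions of the (finite) list.\<close>
definition measurement :: "('v \<Rightarrow> 'a set) \<Rightarrow> 'v set \<Rightarrow> ('v,'a::zero) op list \<Rightarrow> bool" where
  "measurement Sg qs Ms \<longleftrightarrow> (\<forall>M\<in>set Ms. psd Sg qs M) \<and>
     (\<forall>x\<in>basis Sg qs. \<forall>y\<in>basis Sg qs. sum_list (map (\<lambda>M. M x y) Ms) = opId x y)"

definition binmeas :: "('v \<Rightarrow> 'a set) \<Rightarrow> 'v set \<Rightarrow> ('v,'a::zero) op \<Rightarrow> bool" where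
  "binmeas Sg qs B \<longleftrightarrow> loewner Sg qs opzero B \<and> loewner Sg qs B opId"

text \<open>A hole carries a family of specifications indexed by nat lists
  (a partial map; the index set Lambda is its domain).\<close>
type_synonym ('v,'a) fam = "nat list \<Rightarrow> (('v,'a) op \<times> ('v,'a) op) option"

datatype ('v,'a) prog =
    Skip
  | Init "'v set"
  | Unit "'v set" "('v,'a) op"
  | Seq "('v,'a) prog" "('v,'a) prog"
  | Repeat nat "('v,'a) prog"
  | Case "'v set" "(('v,'a) op \<times> ('v,'a) prog) list"
  | While "'v set" "('v,'a) op" "('v,'a) prog"
  | Hole "('v,'a) fam"

fun concrete :: "('v,'a) prog \<Rightarrow> bool" where
  "concrete Skip = True"
| "concrete (Init qs) = True"
| "concrete (Unit qs U) = True"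
| "concrete (Seq S1 S2) = (concrete S1 \<and> concrete S2)"
| "concrete (Repeat N S) = concrete S"
| "concrete (Case qs bs) = (\<forall>b\<in>set bs. concrete (snd b))"
| "concrete (While qs B S) = concrete S"
| "concrete (Hole F) = False"

fun wf_prog :: "('v \<Rightarrow> 'a set) \<Rightarrow> ('v,'a::zero) prog \<Rightarrow> bool" where
  "wf_prog Sg Skip = True"
| "wf_prog Sg (Init qs) = True"
| "wf_prog Sg (Unit qs U) = unitary Sg qs U"
| "wf_prog Sg (Seq S1 S2) = (wf_prog Sg S1 \<and> wf_prog Sg S2)"
| "wf_prog Sg (Repeat N S) = wf_prog Sg S"
| "wf_prog Sg (Case qs bs) = (measurement Sg qs (map fst bs) \<and> (\<forall>b\<in>set bs. wf_prog Sg (snd b)))"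
| "wf_prog Sg (While qs B S) = (binmeas Sg qs B \<and> wf_prog Sg S)"
| "wf_prog Sg (Hole F) = True"

fun denot :: "('v \<Rightarrow> 'a set) \<Rightarrow> ('v,'a::zero) prog \<Rightarrow> ('v,'a) op \<Rightarrow> ('v,'a) op" where
  "denot Sg Skip = (\<lambda>\<rho>. \<rho>)"
| "denot Sg (Init qs) = (\<lambda>\<rho> a b. \<Sum>x\<in>basis Sg qs. sandwich Sg (lift qs (ketbra0 x)) \<rho> a b)"
| "denot Sg (Unit qs U) = sandwich Sg (lift qs U)"
| "denot Sg (Seq S1 S2) = denot Sg S2 \<circ> denot Sg S1"
| "denot Sg (Repeat N S) = denot Sg S ^^ N"
| "denot Sg (Case qs bs) =
     (\<lambda>\<rho> a b. sum_list (map (\<lambda>b'. denot Sg (snd b') (meas_map Sg qs (fst b') \<rho>) a b) bs))"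
| "denot Sg (While qs B S) =
     (\<lambda>\<rho> a b. \<Sum>k. meas_map Sg qs (opdiff opId B)
                     (((denot Sg S \<circ> meas_map Sg qs B) ^^ k) \<rho>) a b)"
| "denot Sg (Hole F) = (\<lambda>\<rho>. opzero)"

definition hoare_tot :: "('v \<Rightarrow> 'a set) \<Rightarrow> ('v,'a::zero) op \<Rightarrow> ('v,'a) prog \<Rightarrow> ('v,'a) op \<Rightarrow> bool" where
  "hoare_tot Sg P S Q \<longleftrightarrow> (\<forall>\<rho>. pstate Sg \<rho> \<longrightarrow>
     Re (trace Sg (opmult Sg UNIV P \<rho>)) \<le> Re (trace Sg (opmult Sg UNIV Q (denot Sg S \<rho>))))"

text \<open>New family indexed by l @ [j] for l in the old index set and j in J.\<close>
definition extend :: "('v,'a) fam \<Rightarrow> nat set \<Rightarrow>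
    (nat list \<Rightarrow> nat \<Rightarrow> ('v,'a) op \<times> ('v,'a) op \<Rightarrow> ('v,'a) op \<times> ('v,'a) op) \<Rightarrow> ('v,'a) fam" where
  "extend F J f = (\<lambda>l. if l \<noteq> [] \<and> last l \<in> J
                       then map_option (f (butlast l) (last l)) (F (butlast l)) else None)"

inductive refines_tot :: "('v \<Rightarrow> 'a set) \<Rightarrow> ('v,'a::zero) prog \<Rightarrow> ('v,'a) prog \<Rightarrow> bool"
  for Sg :: "'v \<Rightarrow> 'a set" where
  H_skip: "(\<forall>l P Q. F l = Some (P,Q) \<longrightarrow> loewner Sg UNIV P Q)
     \<Longrightarrow> refines_tot Sg (Hole F) Skip"
| H_init: "(\<forall>l P Q. F l = Some (P,Q) \<longrightarrow> loewner Sg UNIV P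
              (\<lambda>a b. \<Sum>x\<in>basis Sg qs. sandwich Sg (adj (lift qs (ketbra0 x))) Q a b))
     \<Longrightarrow> refines_tot Sg (Hole F) (Init qs)"
| H_unit: "unitary Sg qs U \<Longrightarrow>
     (\<forall>l P Q. F l = Some (P,Q) \<longrightarrow> loewner Sg UNIV P (sandwich Sg (adj (lift qs U)) Q))
     \<Longrightarrow> refines_tot Sg (Hole F) (Unit qs U)"
| H_seq: "(\<forall>l. l \<in> dom F \<longrightarrow> is_pred Sg (R l))
     \<Longrightarrow> refines_tot Sg (Hole F)
          (Seq (Hole (\<lambda>l. map_option (\<lambda>(P,Q). (P, R l)) (F l)))
               (Hole (\<lambda>l. map_option (\<lambda>(P,Q). (R l, Q)) (F l))))"
| HT_split: "finite \<Gamma> \<Longrightarrow>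
     (\<forall>l. l \<in> dom F \<longrightarrow> (\<forall>g\<in>\<Gamma>. 0 \<le> p l g \<and> is_pred Sg (Pg l g) \<and> is_pred Sg (Qg l g))) \<Longrightarrow>
     (\<forall>l P Q. F l = Some (P,Q) \<longrightarrow>
        loewner Sg UNIV P (\<lambda>a b. \<Sum>g\<in>\<Gamma>. complex_of_real (p l g) * Pg l g a b) \<and>
        loewner Sg UNIV (\<lambda>a b. \<Sum>g\<in>\<Gamma>. complex_of_real (p l g) * Qg l g a b) Q)
     \<Longrightarrow> refines_tot Sg (Hole F) (Hole (extend F \<Gamma> (\<lambda>l g _. (Pg l g, Qg l g))))"
| H_repeat: "(\<forall>l. l \<in> dom F \<longrightarrow> (\<forall>j\<le>N. is_pred Sg (R l j))) \<Longrightarrow>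
     (\<forall>l P Q. F l = Some (P,Q) \<longrightarrow> loewner Sg UNIV P (R l 0) \<and> loewner Sg UNIV (R l N) Q)
     \<Longrightarrow> refines_tot Sg (Hole F)
          (Repeat N (Hole (extend F {0..<N} (\<lambda>l j _. (R l j, R l (Suc j))))))"
| H_case: "measurement Sg qs Ms \<Longrightarrow>
     (\<forall>l. l \<in> dom F \<longrightarrow> (\<forall>w<length Ms. is_pred Sg (Pw l w))) \<Longrightarrow>
     (\<forall>l P Q. F l = Some (P,Q) \<longrightarrow> loewner Sg UNIV P
         (\<lambda>a b. \<Sum>w<length Ms. meas_map Sg qs (Ms ! w) (Pw l w) a b))
     \<Longrightarrow> refines_tot Sg (Hole F)
          (Case qs (map (\<lambda>w. (Ms ! w, Hole (\<lambda>l. map_option (\<lambda>(P,Q). (Pw l w, Q)) (F l))))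
                        [0..<length Ms]))"
| HT_while: "binmeas Sg qs B \<Longrightarrow>
     (\<forall>l. l \<in> dom F \<longrightarrow> (\<forall>n. is_pred Sg (R l n)) \<and> R l 0 = opzero \<and>
          (\<forall>n. loewner Sg UNIV (R l n) (R l (Suc n)))) \<Longrightarrow>
     (\<forall>l P Q. F l = Some (P,Q) \<longrightarrow> (\<exists>Rlim.
          (\<forall>x\<in>basis Sg UNIV. \<forall>y\<in>basis Sg UNIV. (\<lambda>n. R l n x y) \<longlonglongrightarrow> Rlim x y) \<and>
          loewner Sg UNIV P (opadd (meas_map Sg qs (opdiff opId B) Q) (meas_map Sg qs B Rlim))))
     \<Longrightarrow> refines_tot Sg (Hole F)
          (While qs B (Hole (extend F UNIV (\<lambda>l n (P,Q).
              (R l (Suc n), opadd (meas_map Sg qs (opdiff opId B) Q) (meas_map Sg qs B (R l n)))))))"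
| C_seqL: "refines_tot Sg S S' \<Longrightarrow> refines_tot Sg (Seq S T) (Seq S' T)"
| C_seqR: "refines_tot Sg T T' \<Longrightarrow> refines_tot Sg (Seq S T) (Seq S T')"
| C_repeat: "refines_tot Sg S S' \<Longrightarrow> refines_tot Sg (Repeat N S) (Repeat N S')"
| C_case: "i < length bs \<Longrightarrow> refines_tot Sg (snd (bs ! i)) S' \<Longrightarrow>
     refines_tot Sg (Case qs bs) (Case qs (bs[i := (fst (bs ! i), S')]))"
| C_while: "refines_tot Sg S S' \<Longrightarrow> refines_tot Sg (While qs B S) (While qs B S')"

end

theory Submission
  imports Defs
begin


definition qf :: "('v \<Rightarrow> 'a set) \<Rightarrow> 'v set \<Rightarrow> ('v,'a::zero) op \<Rightarrow> (('v \<Rightarrow> 'a) \<Rightarrow> complex) \<Rightarrow> complex" where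
  "qf Sg qs A \<psi> = (\<Sum>x\<in>basis Sg qs. \<Sum>y\<in>basis Sg qs. cnj (\<psi> x) * A x y * \<psi> y)"

definition eqon :: "('v \<Rightarrow> 'a set) \<Rightarrow> 'v set \<Rightarrow> ('v,'a::zero) op \<Rightarrow> ('v,'a) op \<Rightarrow> bool" where
  "eqon Sg qs A B \<longleftrightarrow> (\<forall>x\<in>basis Sg qs. \<forall>y\<in>basis Sg qs. A x y = B x y)"

definition tr :: "('v \<Rightarrow> 'a set) \<Rightarrow> 'v set \<Rightarrow> ('v,'a::zero) op \<Rightarrow> complex" where
  "tr Sg qs A = (\<Sum>x\<in>basis Sg qs. A x x)"

definition scl :: "complex \<Rightarrow> ('v,'a) op \<Rightarrow> ('v,'a) op" where
  "scl c A = (\<lambda>x y. c * A x y)"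

definition bf :: "('v \<Rightarrow> 'a set) \<Rightarrow> 'v set \<Rightarrow> ('v,'a::zero) op \<Rightarrow> (('v \<Rightarrow> 'a) \<Rightarrow> complex) \<Rightarrow> (('v \<Rightarrow> 'a) \<Rightarrow> complex) \<Rightarrow> complex" where
  "bf Sg qs A \<phi> \<psi> = (\<Sum>x\<in>basis Sg qs. \<Sum>y\<in>basis Sg qs. cnj (\<phi> x) * A x y * \<psi> y)"

context fixes Sg :: "'v::finite \<Rightarrow> 'a::{finite,zero} set" begin

lemma finite_basis[simp]: "finite (basis Sg qs)"
  by (rule finite_subset[OF subset_UNIV]) simp

lemma psd_qf: "psd Sg qs A \<longleftrightarrow> (\<forall>\<psi>. Im (qf Sg qs A \<psi>) = 0 \<and> 0 \<le> Re (qf Sg qs A \<psi>))"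
  unfolding psd_def qf_def Let_def by simp

lemma qf_add: "qf Sg qs (opadd A B) \<psi> = qf Sg qs A \<psi> + qf Sg qs B \<psi>"
  unfolding qf_def opadd_def by (simp add: algebra_simps sum.distrib)

lemma qf_diff: "qf Sg qs (opdiff A B) \<psi> = qf Sg qs A \<psi> - qf Sg qs B \<psi>"
  unfolding qf_def opdiff_def by (simp add: algebra_simps sum_subtractf)

lemma qf_scl: "qf Sg qs (scl c A) \<psi> = c * qf Sg qs A \<psi>"
  unfolding qf_def scl_def by (simp add: algebra_simps sum_distrib_left)

lemma qf_zero[simp]: "qf Sg qs opzero \<psi> = 0"
  unfolding qf_def opzero_def by simp

lemma qf_cong: "eqon Sg qs A B \<Longrightarrow> qf Sg qs A \<psi> = qf Sg qs B \<psi>"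
  unfolding qf_def eqon_def by (intro sum.cong refl) auto

lemma psd_cong: "eqon Sg qs A B \<Longrightarrow> psd Sg qs A = psd Sg qs B"
  unfolding psd_qf using qf_cong by metis

lemma eqon_refl[simp]: "eqon Sg qs A A" unfolding eqon_def by auto
lemma eqon_sym: "eqon Sg qs A B \<Longrightarrow> eqon Sg qs B A" unfolding eqon_def by auto
lemma eqon_trans: "eqon Sg qs A B \<Longrightarrow> eqon Sg qs B C \<Longrightarrow> eqon Sg qs A C" unfolding eqon_def by auto

lemma psd_add: "psd Sg qs A \<Longrightarrow> psd Sg qs B \<Longrightarrow> psd Sg qs (opadd A B)"
  unfolding psd_qf qf_add by simp

lemma psd_zero[simp]: "psd Sg qs opzero"
  unfolding psd_qf by simp

lemma psd_scl: "psd Sg qs A \<Longrightarrow> 0 \<le> c \<Longrightarrow> psd Sg qs (scl (complex_of_real c) A)"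
  unfolding psd_qf qf_scl by simp

lemma loewner_refl[simp]: "loewner Sg qs A A"
  unfolding loewner_def psd_qf qf_diff by simp


lemma loewner_qf: "loewner Sg qs A B \<longleftrightarrow> (\<forall>\<psi>. Im (qf Sg qs A \<psi>) = Im (qf Sg qs B \<psi>) \<and> Re (qf Sg qs A \<psi>) \<le> Re (qf Sg qs B \<psi>))"
  unfolding loewner_def psd_qf qf_diff by auto

lemma psd_loewner: "psd Sg qs A \<longleftrightarrow> loewner Sg qs opzero A"
  unfolding loewner_qf psd_qf by auto

lemma loewner_trans: "loewner Sg qs A B \<Longrightarrow> loewner Sg qs B C \<Longrightarrow> loewner Sg qs A C"
  unfolding loewner_qf by (metis order_trans)

section \<open>Matrix algebra\<close>

lemma opmult_assoc: "opmult Sg qs (opmult Sg qs A B) C = opmult Sg qs A (opmult Sg qs B C)"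
proof (intro ext)
  fix x y
  show "opmult Sg qs (opmult Sg qs A B) C x y = opmult Sg qs A (opmult Sg qs B C) x y"
    unfolding opmult_def sum_distrib_left sum_distrib_right
    by (subst sum.swap) (simp add: mult.assoc)
qed

lemma opmult_add_left: "opmult Sg qs (opadd A B) C = opadd (opmult Sg qs A C) (opmult Sg qs B C)"
  unfolding opmult_def opadd_def by (auto simp: algebra_simps sum.distrib intro!: ext)
lemma opmult_add_right: "opmult Sg qs C (opadd A B) = opadd (opmult Sg qs C A) (opmult Sg qs C B)"
  unfolding opmult_def opadd_def by (auto simp: algebra_simps sum.distrib intro!: ext)
lemma opmult_diff_left: "opmult Sg qs (opdiff A B) C = opdiff (opmult Sg qs A C) (opmult Sg qs B C)"
  unfolding opmult_def opdiff_def by (auto simp: algebra_simps sum_subtractf intro!: ext)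
lemma opmult_diff_right: "opmult Sg qs C (opdiff A B) = opdiff (opmult Sg qs C A) (opmult Sg qs C B)"
  unfolding opmult_def opdiff_def by (auto simp: algebra_simps sum_subtractf intro!: ext)
lemma opmult_scl_left: "opmult Sg qs (scl c A) C = scl c (opmult Sg qs A C)"
  unfolding opmult_def scl_def by (auto simp: algebra_simps sum_distrib_left intro!: ext)
lemma opmult_scl_right: "opmult Sg qs C (scl c A) = scl c (opmult Sg qs C A)"
  unfolding opmult_def scl_def by (auto simp: algebra_simps sum_distrib_left intro!: ext)
lemma opmult_zero_left[simp]: "opmult Sg qs opzero C = opzero"
  unfolding opmult_def opzero_def by auto
lemma opmult_zero_right[simp]: "opmult Sg qs C opzero = opzero"
  unfolding opmult_def opzero_def by auto

lemma opmult_cong: "eqon Sg qs A A' \<Longrightarrow> eqon Sg qs B B' \<Longrightarrow> eqon Sg qs (opmult Sg qs A B) (opmult Sg qs A' B')"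
  unfolding eqon_def opmult_def by auto

lemma opId_left: "x \<in> basis Sg qs \<Longrightarrow> opmult Sg qs opId A x y = A x y"
proof -
  assume x: "x \<in> basis Sg qs"
  have "opmult Sg qs opId A x y = (\<Sum>z\<in>basis Sg qs. if x = z then A z y else 0)"
    unfolding opmult_def opId_def by (rule sum.cong) auto
  also have "\<dots> = A x y" using x by (simp add: sum.delta)
  finally show ?thesis .
qed

lemma opId_right: "y \<in> basis Sg qs \<Longrightarrow> opmult Sg qs A opId x y = A x y"
proof -
  assume y: "y \<in> basis Sg qs"
  have "opmult Sg qs A opId x y = (\<Sum>z\<in>basis Sg qs. if z = y then A x z else 0)"
    unfolding opmult_def opId_def by (rule sum.cong) auto
  also have "\<dots> = A x y" using y by (simp add: sum.delta')
  finally show ?thesis .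
qed

lemma eqon_opId_left: "eqon Sg qs (opmult Sg qs opId A) A"
  unfolding eqon_def using opId_left by metis
lemma eqon_opId_right: "eqon Sg qs (opmult Sg qs A opId) A"
  unfolding eqon_def using opId_right by metis

lemma adj_adj[simp]: "adj (adj A) = A" unfolding adj_def by auto
lemma adj_opmult: "adj (opmult Sg qs A B) = opmult Sg qs (adj B) (adj A)"
  unfolding adj_def opmult_def by (auto simp: mult.commute intro!: ext)
lemma adj_opadd: "adj (opadd A B) = opadd (adj A) (adj B)"
  unfolding adj_def opadd_def by auto
lemma adj_opdiff: "adj (opdiff A B) = opdiff (adj A) (adj B)"
  unfolding adj_def opdiff_def by auto
lemma adj_opId[simp]: "adj opId = opId" unfolding adj_def opId_def by (auto intro!: ext)
lemma adj_opzero[simp]: "adj opzero = opzero" unfolding adj_def opzero_def by auto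

lemma tr_cyclic: "tr Sg qs (opmult Sg qs A B) = tr Sg qs (opmult Sg qs B A)"
  unfolding tr_def opmult_def by (subst sum.swap) (simp add: mult.commute)

lemma tr_add: "tr Sg qs (opadd A B) = tr Sg qs A + tr Sg qs B"
  unfolding tr_def opadd_def by (simp add: sum.distrib)
lemma tr_diff: "tr Sg qs (opdiff A B) = tr Sg qs A - tr Sg qs B"
  unfolding tr_def opdiff_def by (simp add: sum_subtractf)
lemma tr_scl: "tr Sg qs (scl c A) = c * tr Sg qs A"
  unfolding tr_def scl_def by (simp add: sum_distrib_left)
lemma tr_cong: "eqon Sg qs A B \<Longrightarrow> tr Sg qs A = tr Sg qs B"
  unfolding tr_def eqon_def by auto


lemma qf_bf: "qf Sg qs A \<psi> = bf Sg qs A \<psi> \<psi>" unfolding qf_def bf_def ..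

lemma bf_add1: "bf Sg qs A (\<lambda>z. \<phi>1 z + \<phi>2 z) \<psi> = bf Sg qs A \<phi>1 \<psi> + bf Sg qs A \<phi>2 \<psi>"
  unfolding bf_def by (simp add: algebra_simps sum.distrib)
lemma bf_add2: "bf Sg qs A \<phi> (\<lambda>z. \<psi>1 z + \<psi>2 z) = bf Sg qs A \<phi> \<psi>1 + bf Sg qs A \<phi> \<psi>2"
  unfolding bf_def by (simp add: algebra_simps sum.distrib)

lemma sum_delta_mult_right: "finite X \<Longrightarrow> (\<Sum>y\<in>X. f y * (if y = a then c else 0)) = (if a \<in> X then f a * c else (0::complex))"
proof -
  assume "finite X"
  have "(\<Sum>y\<in>X. f y * (if y = a then c else 0)) = (\<Sum>y\<in>X. if y = a then f y * c else 0)"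
    by (rule sum.cong) auto
  thus ?thesis using \<open>finite X\<close> by (simp add: sum.delta')
qed

lemma sum_delta_mult_left: "finite X \<Longrightarrow> (\<Sum>y\<in>X. (if y = a then c else 0) * f y) = (if a \<in> X then c * f a else (0::complex))"
proof -
  assume "finite X"
  have "(\<Sum>y\<in>X. (if y = a then c else 0) * f y) = (\<Sum>y\<in>X. if y = a then c * f y else 0)"
    by (rule sum.cong) auto
  thus ?thesis using \<open>finite X\<close> by (simp add: sum.delta')
qed

lemma bf_delta: "a \<in> basis Sg qs \<Longrightarrow> b \<in> basis Sg qs \<Longrightarrow>
  bf Sg qs A (\<lambda>z. if z = a then \<alpha> else 0) (\<lambda>z. if z = b then \<beta> else 0) = cnj \<alpha> * A a b * \<beta>"
proof -
  assume a: "a \<in> basis Sg qs" and b: "b \<in> basis Sg qs"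
  have "bf Sg qs A (\<lambda>z. if z = a then \<alpha> else 0) (\<lambda>z. if z = b then \<beta> else 0)
     = (\<Sum>x\<in>basis Sg qs. (if x = a then cnj \<alpha> else 0) * (A x b * \<beta>))"
    unfolding bf_def
  proof (rule sum.cong[OF refl])
    fix x assume "x \<in> basis Sg qs"
    have "(\<Sum>y\<in>basis Sg qs. cnj (if x = a then \<alpha> else 0) * A x y * (if y = b then \<beta> else 0)) = cnj (if x = a then \<alpha> else 0) * A x b * \<beta>" by (simp only: sum_delta_mult_right finite_basis b if_True)
    then have F: "(\<Sum>y\<in>basis Sg qs. cnj (if x = a then \<alpha> else 0) * A x y * (if y = b then \<beta> else 0)) =
         cnj (if x = a then \<alpha> else 0) * A x b * \<beta>" .
    show "(\<Sum>y\<in>basis Sg qs. cnj (if x = a then \<alpha> else 0) * A x y * (if y = b then \<beta> else 0)) =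
         (if x = a then cnj \<alpha> else 0) * (A x b * \<beta>)" using F by (simp only: mult.assoc if_distrib[of cnj] complex_cnj_zero)
  qed
  also have "\<dots> = cnj \<alpha> * A a b * \<beta>" by (simp add: sum_delta_mult_left a mult.assoc)
  finally show ?thesis .
qed

lemma qf_delta1: "a \<in> basis Sg qs \<Longrightarrow> qf Sg qs A (\<lambda>z. if z = a then \<alpha> else 0) = cnj \<alpha> * A a a * \<alpha>"
  by (simp add: qf_bf bf_delta)

lemma qf_delta2: "a \<in> basis Sg qs \<Longrightarrow> b \<in> basis Sg qs \<Longrightarrow>
  qf Sg qs A (\<lambda>z. (if z = a then \<alpha> else 0) + (if z = b then \<beta> else 0)) =
   cnj \<alpha> * A a a * \<alpha> + cnj \<alpha> * A a b * \<beta> + cnj \<beta> * A b a * \<alpha> + cnj \<beta> * A b b * \<beta>"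
  by (simp add: qf_bf bf_add1 bf_add2 bf_delta)

lemma psd_diag: "psd Sg qs A \<Longrightarrow> a \<in> basis Sg qs \<Longrightarrow> Im (A a a) = 0 \<and> 0 \<le> Re (A a a)"
proof -
  assume "psd Sg qs A" "a \<in> basis Sg qs"
  then have "Im (qf Sg qs A (\<lambda>z. if z = a then 1 else 0)) = 0 \<and> 0 \<le> Re (qf Sg qs A (\<lambda>z. if z = a then 1 else 0))"
    unfolding psd_qf by blast
  then show ?thesis using qf_delta1[OF \<open>a \<in> basis Sg qs\<close>, of A 1] by simp
qed

lemma psd_herm: assumes "psd Sg qs A" "a \<in> basis Sg qs" "b \<in> basis Sg qs"
  shows "A b a = cnj (A a b)"
proof -
  have p: "\<And>\<psi>. Im (qf Sg qs A \<psi>) = 0" using assms(1) unfolding psd_qf by blast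
  have 1: "Im (A a a + A a b + A b a + A b b) = 0"
    using p[of "\<lambda>z. (if z = a then 1 else 0) + (if z = b then 1 else 0)"] qf_delta2[OF assms(2,3), of A 1 1] by simp
  have 2: "Im (A a a + A a b * \<i> - \<i> * A b a + A b b) = 0"
    using p[of "\<lambda>z. (if z = a then 1 else 0) + (if z = b then \<i> else 0)"] qf_delta2[OF assms(2,3), of A 1 \<i>] by simp
  have da: "Im (A a a) = 0" "Im (A b b) = 0" using psd_diag assms by auto
  have "Re (A b a) = Re (A a b)" "Im (A b a) = - Im (A a b)" using 1 2 da by simp_all
  then show ?thesis by (simp add: complex_eq_iff)
qed

lemma psd_entry: assumes "psd Sg qs A" "a \<in> basis Sg qs" "b \<in> basis Sg qs"
  shows "cmod (A a b) \<le> (Re (A a a) + Re (A b b)) / 2"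
proof (cases "a = b")
  case True
  have "Im (A a a) = 0" "0 \<le> Re (A a a)" using psd_diag[OF assms(1,2)] by auto
  then have "cmod (A a a) = Re (A a a)" using cmod_eq_Re by force
  then show ?thesis using True by simp
next
  case False
  have da: "0 \<le> Re (A a a)" "0 \<le> Re (A b b)" using psd_diag[OF assms(1,2)] psd_diag[OF assms(1,3)] by auto
  show ?thesis
  proof (cases "A a b = 0")
    case True
    then show ?thesis using da by simp
  next
    case nz: False
    define c where "c = cmod (A a b)"
    have c0: "c \<noteq> 0" using nz unfolding c_def by simp
    define u where "u = cnj (A a b) / complex_of_real c"
    have h: "A b a = cnj (A a b)" using psd_herm assms by blast
    have sq: "A a b * cnj (A a b) = complex_of_real c * complex_of_real c"
      unfolding c_def using complex_norm_square[of "A a b"] by (simp add: power2_eq_square)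
    have u1: "A a b * u = complex_of_real c"
    proof -
      have "A a b * u = (A a b * cnj (A a b)) / complex_of_real c" unfolding u_def by simp
      also have "\<dots> = complex_of_real c" using c0 sq by simp
      finally show ?thesis .
    qed
    have u1': "cnj u * A b a = complex_of_real c"
      using arg_cong[OF u1, of cnj] h by (simp add: mult.commute)
    have u2: "cnj u * u = 1"
    proof -
      have "cnj u * u = (A a b * cnj (A a b)) / (complex_of_real c * complex_of_real c)"
        unfolding u_def by (simp add: mult.commute)
      also have "\<dots> = 1" using c0 sq by simp
      finally show ?thesis .
    qed
    have "qf Sg qs A (\<lambda>z. (if z = a then 1 else 0) + (if z = b then -u else 0)) =
       A a a + A a b * (- u) + cnj (- u) * A b a + cnj (-u) * A b b * (-u)"
      using qf_delta2[OF assms(2,3), of A 1 "-u"] by simp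
    also have "\<dots> = A a a + A b b - 2 * complex_of_real c"
    proof -
      have "cnj (-u) * A b b * (-u) = A b b * (cnj u * u)" by (simp add: algebra_simps)
      then show ?thesis using u1 u1' u2 by (simp add: algebra_simps)
    qed
    finally have e: "qf Sg qs A (\<lambda>z. (if z = a then 1 else 0) + (if z = b then -u else 0)) =
       A a a + A b b - 2 * complex_of_real c" .
    have "0 \<le> Re (qf Sg qs A (\<lambda>z. (if z = a then 1 else 0) + (if z = b then -u else 0)))"
      using assms(1) unfolding psd_qf by blast
    then have "0 \<le> Re (A a a) + Re (A b b) - 2 * c" unfolding e by simp
    then show ?thesis unfolding c_def by simp
  qed
qed

lemma sum4_reorder: "(\<Sum>x\<in>A. \<Sum>y\<in>B. \<Sum>u\<in>C. \<Sum>v\<in>D. f x y u v) = (\<Sum>u\<in>C. \<Sum>v\<in>D. \<Sum>x\<in>A. \<Sum>y\<in>B. f x y u v)"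
proof -
  have "(\<Sum>x\<in>A. \<Sum>y\<in>B. \<Sum>u\<in>C. \<Sum>v\<in>D. f x y u v) = (\<Sum>x\<in>A. \<Sum>u\<in>C. \<Sum>y\<in>B. \<Sum>v\<in>D. f x y u v)"
    by (rule sum.cong[OF refl], rule sum.swap)
  also have "\<dots> = (\<Sum>x\<in>A. \<Sum>u\<in>C. \<Sum>v\<in>D. \<Sum>y\<in>B. f x y u v)"
    by (rule sum.cong[OF refl], rule sum.cong[OF refl], rule sum.swap)
  also have "\<dots> = (\<Sum>u\<in>C. \<Sum>x\<in>A. \<Sum>v\<in>D. \<Sum>y\<in>B. f x y u v)" by (rule sum.swap)
  also have "\<dots> = (\<Sum>u\<in>C. \<Sum>v\<in>D. \<Sum>x\<in>A. \<Sum>y\<in>B. f x y u v)"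
    by (rule sum.cong[OF refl], rule sum.swap)
  finally show ?thesis .
qed

lemma qf_sandwich: "qf Sg qs (opmult Sg qs (opmult Sg qs K M) (adj K)) \<psi> =
   qf Sg qs M (\<lambda>v. \<Sum>y\<in>basis Sg qs. cnj (K y v) * \<psi> y)"
proof -
  let ?X = "basis Sg qs"
  have "qf Sg qs (opmult Sg qs (opmult Sg qs K M) (adj K)) \<psi> =
     (\<Sum>x\<in>?X. \<Sum>y\<in>?X. \<Sum>v\<in>?X. \<Sum>u\<in>?X. cnj (\<psi> x) * K x u * M u v * cnj (K y v) * \<psi> y)"
    unfolding qf_def opmult_def adj_def
    by (intro sum.cong refl) (simp add: sum_distrib_left sum_distrib_right mult.assoc)
  also have "\<dots> = (\<Sum>v\<in>?X. \<Sum>u\<in>?X. \<Sum>x\<in>?X. \<Sum>y\<in>?X. cnj (\<psi> x) * K x u * M u v * cnj (K y v) * \<psi> y)"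
    by (rule sum4_reorder)
  also have "\<dots> = (\<Sum>u\<in>?X. \<Sum>v\<in>?X. \<Sum>x\<in>?X. \<Sum>y\<in>?X. cnj (\<psi> x) * K x u * M u v * cnj (K y v) * \<psi> y)"
    by (rule sum.swap)
  also have "\<dots> = qf Sg qs M (\<lambda>v. \<Sum>y\<in>basis Sg qs. cnj (K y v) * \<psi> y)"
    unfolding qf_def
    apply (intro sum.cong refl)
    apply (simp add: sum_distrib_left sum_distrib_right mult.assoc mult.left_commute)
    by (rule sum.swap)
  finally show ?thesis .
qed

lemma psd_sandwich: "psd Sg qs M \<Longrightarrow> psd Sg qs (opmult Sg qs (opmult Sg qs K M) (adj K))"
  unfolding psd_qf qf_sandwich by blast

end


definition cutX :: "('v \<Rightarrow> 'a set) \<Rightarrow> 'v set \<Rightarrow> ('v,'a::zero) op \<Rightarrow> ('v,'a) op" where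
  "cutX Sg qs A = (\<lambda>x y. if x \<in> basis Sg qs \<and> y \<in> basis Sg qs then A x y else 0)"

abbreviation idX :: "('v \<Rightarrow> 'a set) \<Rightarrow> 'v set \<Rightarrow> ('v,'a::zero) op" where
  "idX Sg qs \<equiv> cutX Sg qs opId"

context fixes Sg :: "'v::finite \<Rightarrow> 'a::{finite,zero} set" begin

section \<open>Convergence\<close>

lemma qf_tendsto:
  assumes "\<forall>x\<in>basis Sg qs. \<forall>y\<in>basis Sg qs. (\<lambda>n. R n x y) \<longlonglongrightarrow> L x y"
  shows "(\<lambda>n. qf Sg qs (R n) \<psi>) \<longlonglongrightarrow> qf Sg qs L \<psi>"
  unfolding qf_def using assms by (auto intro!: tendsto_sum tendsto_mult tendsto_const)

lemma psd_limit:
  assumes "\<forall>x\<in>basis Sg qs. \<forall>y\<in>basis Sg qs. (\<lambda>n. R n x y) \<longlonglongrightarrow> L x y"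
    and "\<And>n. psd Sg qs (R n)"
  shows "psd Sg qs L"
  unfolding psd_qf
proof
  fix \<psi>
  have t: "(\<lambda>n. qf Sg qs (R n) \<psi>) \<longlonglongrightarrow> qf Sg qs L \<psi>" by (rule qf_tendsto[OF assms(1)])
  have "(\<lambda>n. Im (qf Sg qs (R n) \<psi>)) \<longlonglongrightarrow> Im (qf Sg qs L \<psi>)" by (intro tendsto_intros t)
  moreover have "\<And>n. Im (qf Sg qs (R n) \<psi>) = 0" using assms(2) unfolding psd_qf by blast
  ultimately have 1: "Im (qf Sg qs L \<psi>) = 0" by (simp add: LIMSEQ_const_iff)
  have "(\<lambda>n. Re (qf Sg qs (R n) \<psi>)) \<longlonglongrightarrow> Re (qf Sg qs L \<psi>)" by (intro tendsto_intros t)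
  moreover have "\<And>n. 0 \<le> Re (qf Sg qs (R n) \<psi>)" using assms(2) unfolding psd_qf by blast
  ultimately have 2: "0 \<le> Re (qf Sg qs L \<psi>)" by (meson LIMSEQ_le_const)
  show "Im (qf Sg qs L \<psi>) = 0 \<and> 0 \<le> Re (qf Sg qs L \<psi>)" using 1 2 by simp
qed

lemma tendsto_opdiff:
  assumes "\<forall>x\<in>basis Sg qs. \<forall>y\<in>basis Sg qs. (\<lambda>n. R n x y) \<longlonglongrightarrow> L x y"
  shows "\<forall>x\<in>basis Sg qs. \<forall>y\<in>basis Sg qs. (\<lambda>n. opdiff B (R n) x y) \<longlonglongrightarrow> opdiff B L x y"
  using assms unfolding opdiff_def by (auto intro!: tendsto_intros)

lemma loewner_limit:
  assumes "\<forall>x\<in>basis Sg qs. \<forall>y\<in>basis Sg qs. (\<lambda>n. R n x y) \<longlonglongrightarrow> L x y"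
    and "\<And>n. loewner Sg qs (R n) B"
  shows "loewner Sg qs L B"
  unfolding loewner_def
  by (rule psd_limit[OF tendsto_opdiff[OF assms(1)]]) (use assms(2) in \<open>auto simp: loewner_def\<close>)

lemma opmult_tendsto:
  assumes "\<forall>x\<in>basis Sg qs. \<forall>y\<in>basis Sg qs. (\<lambda>n. R n x y) \<longlonglongrightarrow> L x y"
    and "\<forall>x\<in>basis Sg qs. \<forall>y\<in>basis Sg qs. (\<lambda>n. R' n x y) \<longlonglongrightarrow> L' x y"
    and "x \<in> basis Sg qs" "y \<in> basis Sg qs"
  shows "(\<lambda>n. opmult Sg qs (R n) (R' n) x y) \<longlonglongrightarrow> opmult Sg qs L L' x y"
  unfolding opmult_def using assms by (auto intro!: tendsto_sum tendsto_mult)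

lemma qf_mono_conv:
  assumes mono: "\<And>n. loewner Sg qs (R n) (R (Suc n))" and bd: "\<And>n. loewner Sg qs (R n) B"
  shows "convergent (\<lambda>n. qf Sg qs (R n) \<psi>)"
proof -
  have im: "\<And>n. Im (qf Sg qs (R n) \<psi>) = Im (qf Sg qs B \<psi>)" using bd unfolding loewner_qf by blast
  have inc: "incseq (\<lambda>n. Re (qf Sg qs (R n) \<psi>))"
    using mono unfolding loewner_qf by (intro incseq_SucI) blast
  have b: "\<forall>i. Re (qf Sg qs (R i) \<psi>) \<le> Re (qf Sg qs B \<psi>)" using bd unfolding loewner_qf by blast
  obtain L where L: "(\<lambda>n. Re (qf Sg qs (R n) \<psi>)) \<longlonglongrightarrow> L" using incseq_convergent[OF inc b] by blast
  have "(\<lambda>n. Complex (Re (qf Sg qs (R n) \<psi>)) (Im (qf Sg qs (R n) \<psi>))) \<longlonglongrightarrow> Complex L (Im (qf Sg qs B \<psi>))"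
    unfolding im by (intro tendsto_intros L)
  then show ?thesis unfolding convergent_def by (auto simp: complex_eq_iff)
qed

lemma mono_entry_conv:
  assumes mono: "\<And>n. loewner Sg qs (R n) (R (Suc n))" and bd: "\<And>n. loewner Sg qs (R n) B"
    and psdR: "\<And>n. psd Sg qs (R n)"
    and a: "a \<in> basis Sg qs" and b: "b \<in> basis Sg qs"
  shows "convergent (\<lambda>n. R n a b)"
proof (cases "a = b")
  case True
  have "convergent (\<lambda>n. qf Sg qs (R n) (\<lambda>z. if z = a then 1 else 0))" by (rule qf_mono_conv[of qs R, OF mono bd])
  then show ?thesis using qf_delta1[OF a] True by simp
next
  case False
  define q1 where "q1 = (\<lambda>n. qf Sg qs (R n) (\<lambda>z. (if z = a then 1 else 0) + (if z = b then 1 else 0)))"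
  define q2 where "q2 = (\<lambda>n. qf Sg qs (R n) (\<lambda>z. (if z = a then 1 else 0) + (if z = b then \<i> else 0)))"
  define q3 where "q3 = (\<lambda>n. qf Sg qs (R n) (\<lambda>z. if z = a then 1 else 0))"
  define q4 where "q4 = (\<lambda>n. qf Sg qs (R n) (\<lambda>z. if z = b then 1 else 0))"
  have c: "convergent q1" "convergent q2" "convergent q3" "convergent q4"
    unfolding q1_def q2_def q3_def q4_def by (rule qf_mono_conv[of qs R, OF mono bd])+
  have e1: "q1 n = R n a a + R n a b + R n b a + R n b b" for n
    unfolding q1_def using qf_delta2[OF a b] by simp
  have e2: "q2 n = R n a a + R n a b * \<i> - \<i> * R n b a + R n b b" for n
  proof -
    have "q2 n = cnj 1 * R n a a * 1 + cnj 1 * R n a b * \<i> + cnj \<i> * R n b a * 1 + cnj \<i> * R n b b * \<i>"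
      unfolding q2_def by (rule qf_delta2[OF a b])
    also have "\<dots> = R n a a + R n a b * \<i> - \<i> * R n b a + R n b b"
      by (simp add: algebra_simps)
    finally show ?thesis .
  qed
  have e3: "q3 n = R n a a" for n unfolding q3_def using qf_delta1[OF a] by simp
  have e4: "q4 n = R n b b" for n unfolding q4_def using qf_delta1[OF b] by simp
  have eq: "(\<lambda>n. R n a b) = (\<lambda>n. (q1 n - \<i> * q2 n - (1 - \<i>) * (q3 n + q4 n)) / 2)"
    by (rule ext) (simp add: e1 e2 e3 e4 algebra_simps)
  from c obtain l1 l2 l3 l4 where "q1 \<longlonglongrightarrow> l1" "q2 \<longlonglongrightarrow> l2" "q3 \<longlonglongrightarrow> l3" "q4 \<longlonglongrightarrow> l4"
    unfolding convergent_def by blast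
  then have "(\<lambda>n. (q1 n - \<i> * q2 n - (1 - \<i>) * (q3 n + q4 n)) / 2) \<longlonglongrightarrow> (l1 - \<i> * l2 - (1 - \<i>) * (l3 + l4)) / 2"
    by (intro tendsto_intros) simp_all
  then show ?thesis unfolding eq convergent_def by blast
qed

lemma mono_lim:
  assumes mono: "\<And>n. loewner Sg qs (R n) (R (Suc n))" and bd: "\<And>n. loewner Sg qs (R n) B"
    and psdR: "\<And>n. psd Sg qs (R n)"
  shows "\<forall>x\<in>basis Sg qs. \<forall>y\<in>basis Sg qs. (\<lambda>n. R n x y) \<longlonglongrightarrow> (\<lambda>x y. lim (\<lambda>n. R n x y)) x y"
  using mono_entry_conv[of qs R B, OF mono bd psdR] by (simp add: convergent_LIMSEQ_iff)

end


fun sqseq :: "('v \<Rightarrow> 'a set) \<Rightarrow> 'v set \<Rightarrow> ('v,'a::zero) op \<Rightarrow> nat \<Rightarrow> ('v,'a) op" where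
  "sqseq Sg qs C 0 = opzero"
| "sqseq Sg qs C (Suc k) = scl (1/2) (opadd C (opmult Sg qs (sqseq Sg qs C k) (sqseq Sg qs C k)))"

fun pw :: "('v \<Rightarrow> 'a set) \<Rightarrow> 'v set \<Rightarrow> ('v,'a::zero) op \<Rightarrow> nat \<Rightarrow> ('v,'a) op" where
  "pw Sg qs C 0 = idX Sg qs"
| "pw Sg qs C (Suc e) = opmult Sg qs C (pw Sg qs C e)"

definition NF :: "('v \<Rightarrow> 'a set) \<Rightarrow> 'v set \<Rightarrow> ('v,'a::zero) op \<Rightarrow> (real \<times> nat) list \<Rightarrow> ('v,'a) op" where
  "NF Sg qs C L = foldr (\<lambda>ce acc. opadd (scl (complex_of_real (fst ce)) (pw Sg qs C (snd ce))) acc) L opzero"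

context fixes Sg :: "'v::finite \<Rightarrow> 'a::{finite,zero} set" begin

section \<open>Supported operators\<close>

lemma supported_cutX[simp]: "supported Sg qs (cutX Sg qs A)"
  unfolding supported_def cutX_def by auto
lemma eqon_cutX: "eqon Sg qs (cutX Sg qs A) A" unfolding eqon_def cutX_def by auto
lemma supported_eq: "supported Sg qs A \<Longrightarrow> supported Sg qs B \<Longrightarrow> eqon Sg qs A B \<Longrightarrow> A = B"
  unfolding supported_def eqon_def by (intro ext) metis
lemma supported_opmult[simp]: "supported Sg qs A \<Longrightarrow> supported Sg qs B \<Longrightarrow> supported Sg qs (opmult Sg qs A B)"
  unfolding supported_def opmult_def by auto
lemma supported_opadd[simp]: "supported Sg qs A \<Longrightarrow> supported Sg qs B \<Longrightarrow> supported Sg qs (opadd A B)"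
  unfolding supported_def opadd_def by auto
lemma supported_opdiff[simp]: "supported Sg qs A \<Longrightarrow> supported Sg qs B \<Longrightarrow> supported Sg qs (opdiff A B)"
  unfolding supported_def opdiff_def by auto
lemma supported_scl[simp]: "supported Sg qs A \<Longrightarrow> supported Sg qs (scl c A)"
  unfolding supported_def scl_def by auto
lemma supported_opzero[simp]: "supported Sg qs opzero"
  unfolding supported_def opzero_def by auto
lemma supported_adj[simp]: "supported Sg qs A \<Longrightarrow> supported Sg qs (adj A)"
  unfolding supported_def adj_def by auto

lemma idX_left: "supported Sg qs A \<Longrightarrow> opmult Sg qs (idX Sg qs) A = A"
proof (rule ext, rule ext)
  fix x y assume s: "supported Sg qs A"
  show "opmult Sg qs (idX Sg qs) A x y = A x y"
  proof (cases "x \<in> basis Sg qs")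
    case True
    have "opmult Sg qs (idX Sg qs) A x y = opmult Sg qs opId A x y"
      unfolding opmult_def cutX_def using True by (intro sum.cong) auto
    then show ?thesis using opId_left[OF True] by simp
  next
    case False
    then show ?thesis using s unfolding opmult_def cutX_def supported_def by auto
  qed
qed

lemma idX_right: "supported Sg qs A \<Longrightarrow> opmult Sg qs A (idX Sg qs) = A"
proof (rule ext, rule ext)
  fix x y assume s: "supported Sg qs A"
  show "opmult Sg qs A (idX Sg qs) x y = A x y"
  proof (cases "y \<in> basis Sg qs")
    case True
    have "opmult Sg qs A (idX Sg qs) x y = opmult Sg qs A opId x y"
      unfolding opmult_def cutX_def using True by (intro sum.cong) auto
    then show ?thesis using opId_right[OF True] by simp
  next
    case False
    then show ?thesis using s unfolding opmult_def cutX_def supported_def by auto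
  qed
qed

lemma adj_idX[simp]: "adj (idX Sg qs) = idX Sg qs"
  unfolding adj_def cutX_def opId_def by (auto intro!: ext)

lemma herm_adj: "supported Sg qs A \<Longrightarrow> psd Sg qs A \<Longrightarrow> adj A = A"
  apply (rule supported_eq[of qs], simp, simp)
  unfolding eqon_def adj_def using psd_herm by metis

lemma psd_opId: "psd Sg qs opId"
proof -
  have "qf Sg qs opId \<psi> = (\<Sum>x\<in>basis Sg qs. cnj (\<psi> x) * \<psi> x)" for \<psi>
  proof -
    have "qf Sg qs opId \<psi> = (\<Sum>x\<in>basis Sg qs. \<Sum>y\<in>basis Sg qs. (cnj (\<psi> x)) * (if y = x then \<psi> y else 0))"
      unfolding qf_def opId_def by (intro sum.cong refl) auto
    also have "\<dots> = (\<Sum>x\<in>basis Sg qs. cnj (\<psi> x) * \<psi> x)"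
      by (intro sum.cong refl) (simp add: sum_distrib_left[symmetric] sum.delta')
    finally show ?thesis .
  qed
  moreover have "Im (cnj z * z) = 0 \<and> 0 \<le> Re (cnj z * z)" for z :: complex
    by (simp add: algebra_simps)
  ultimately show ?thesis unfolding psd_qf by (simp add: Im_sum Re_sum sum_nonneg)
qed

lemma psd_idX: "psd Sg qs (idX Sg qs)"
  using psd_cong[OF eqon_cutX] psd_opId by blast

lemma psd_half: "psd Sg qs A \<Longrightarrow> psd Sg qs (scl (1/2) A)"
  unfolding psd_qf qf_scl by simp

lemma psd_tr: "psd Sg qs A \<Longrightarrow> Im (tr Sg qs A) = 0 \<and> 0 \<le> Re (tr Sg qs A)"
proof -
  assume "psd Sg qs A"
  then have "\<forall>x\<in>basis Sg qs. Im (A x x) = 0 \<and> 0 \<le> Re (A x x)" using psd_diag by blast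
  then show ?thesis unfolding tr_def by (simp add: Im_sum Re_sum sum_nonneg)
qed

lemma psd_tr0: assumes "psd Sg qs A" "tr Sg qs A = 0" shows "eqon Sg qs A opzero"
proof -
  have d: "\<forall>x\<in>basis Sg qs. Re (A x x) = 0"
  proof -
    have "(\<Sum>x\<in>basis Sg qs. Re (A x x)) = 0" using assms(2) unfolding tr_def by (simp add: Re_sum[symmetric])
    then show ?thesis using sum_nonneg_eq_0_iff[of "basis Sg qs" "\<lambda>x. Re (A x x)"] psd_diag[OF assms(1)] by simp
  qed
  show ?thesis unfolding eqon_def opzero_def
  proof (intro ballI)
    fix x y assume x: "x \<in> basis Sg qs" and y: "y \<in> basis Sg qs"
    have "cmod (A x y) \<le> (Re (A x x) + Re (A y y)) / 2" by (rule psd_entry[OF assms(1) x y])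
    then show "A x y = 0" using d x y by simp
  qed
qed

lemma herm_sq0: assumes s: "supported Sg qs H" and h: "adj H = H" and z: "opmult Sg qs H H = opzero"
  shows "H = opzero"
proof (rule supported_eq[of qs], fact, simp, unfold eqon_def, intro ballI)
  fix x y assume x: "x \<in> basis Sg qs" and y: "y \<in> basis Sg qs"
  have hc: "H z x = cnj (H x z)" for z using fun_cong[OF fun_cong[OF h, of x], of z] unfolding adj_def by (metis complex_cnj_cnj)
  have "0 = opmult Sg qs H H x x" using z unfolding opzero_def by metis
  also have "\<dots> = (\<Sum>z\<in>basis Sg qs. complex_of_real ((cmod (H x z))\<^sup>2))"
    unfolding opmult_def hc by (intro sum.cong refl) (metis complex_norm_square)
  finally have "(\<Sum>z\<in>basis Sg qs. (cmod (H x z))\<^sup>2) = 0"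
    by (metis of_real_eq_0_iff of_real_sum)
  then have "\<forall>z\<in>basis Sg qs. (cmod (H x z))\<^sup>2 = 0" by (subst (asm) sum_nonneg_eq_0_iff) auto
  then show "H x y = opzero x y" using y unfolding opzero_def by simp
qed

end

context fixes Sg :: "'v::finite \<Rightarrow> 'a::{finite,zero} set" and qs :: "'v set" and C :: "('v,'a) op"
  assumes sC: "supported Sg qs C" and pC: "psd Sg qs C" and bC: "psd Sg qs (opdiff (idX Sg qs) C)"
begin

lemma adjC: "adj C = C" using herm_adj sC pC by blast

lemma pw_supp[simp]: "supported Sg qs (pw Sg qs C e)"
  by (induct e) (simp_all add: sC)

lemma pw_add: "pw Sg qs C (a + b) = opmult Sg qs (pw Sg qs C a) (pw Sg qs C b)"
  by (induct a) (simp_all add: idX_left opmult_assoc)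

lemma pw_1: "pw Sg qs C 1 = C" by (simp add: idX_right sC)

lemma pw_comm: "opmult Sg qs (pw Sg qs C e) C = opmult Sg qs C (pw Sg qs C e)"
  using pw_add[of e 1] pw_add[of 1 e] pw_1 by (simp add: add.commute)

lemma pw_adj: "adj (pw Sg qs C e) = pw Sg qs C e"
  by (induct e) (simp_all add: adj_opmult adjC pw_comm)

lemma pw_psd: "psd Sg qs (pw Sg qs C e)"
proof -
  have "e = e div 2 + e div 2 \<or> e = e div 2 + (1 + e div 2)" by presburger
  then obtain m where "e = m + m \<or> e = m + (1 + m)" by blast
  then show ?thesis
  proof
    assume e: "e = m + m"
    have "pw Sg qs C e = opmult Sg qs (opmult Sg qs (pw Sg qs C m) (idX Sg qs)) (adj (pw Sg qs C m))"
      unfolding e pw_add pw_adj by (simp add: idX_right)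
    then show ?thesis using psd_sandwich psd_idX by metis
  next
    assume e: "e = m + (1 + m)"
    have "pw Sg qs C e = opmult Sg qs (opmult Sg qs (pw Sg qs C m) C) (adj (pw Sg qs C m))"
      unfolding e pw_add pw_adj pw_1 by (simp add: opmult_assoc)
    then show ?thesis using psd_sandwich pC by metis
  qed
qed

lemma NF_Nil[simp]: "NF Sg qs C [] = opzero" unfolding NF_def by simp
lemma NF_Cons: "NF Sg qs C (ce # L) = opadd (scl (complex_of_real (fst ce)) (pw Sg qs C (snd ce))) (NF Sg qs C L)"
  unfolding NF_def by simp

lemma opadd_zero_left[simp]: "opadd opzero A = A" unfolding opadd_def opzero_def by simp
lemma opadd_assoc: "opadd (opadd A B) D = opadd A (opadd B D)" unfolding opadd_def by (simp add: add.assoc)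

lemma NF_append: "NF Sg qs C (L1 @ L2) = opadd (NF Sg qs C L1) (NF Sg qs C L2)"
  by (induct L1) (simp_all add: NF_Cons opadd_assoc)

lemma NF_supp[simp]: "supported Sg qs (NF Sg qs C L)"
  by (induct L) (simp_all add: NF_Cons)

lemma NF_psd: "\<forall>p\<in>set L. 0 \<le> fst p \<Longrightarrow> psd Sg qs (NF Sg qs C L)"
  by (induct L) (simp_all add: NF_Cons psd_add psd_scl pw_psd)

lemma scl_opadd: "scl c (opadd A B) = opadd (scl c A) (scl c B)"
  unfolding scl_def opadd_def by (simp add: algebra_simps)
lemma scl_scl: "scl c (scl d A) = scl (c * d) A"
  unfolding scl_def by (simp add: algebra_simps)
lemma scl_zero[simp]: "scl c opzero = opzero"
  unfolding scl_def opzero_def by simp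

lemma NF_scl: "scl (complex_of_real r) (NF Sg qs C L) = NF Sg qs C (map (\<lambda>(c,e). (r*c, e)) L)"
  by (induct L) (auto simp: NF_Cons scl_opadd scl_scl)

lemma pw_NF: "opmult Sg qs (pw Sg qs C e) (NF Sg qs C L) = NF Sg qs C (map (\<lambda>(c,e'). (c, e + e')) L)"
  by (induct L) (auto simp: NF_Cons opmult_add_right opmult_scl_right pw_add)

lemma NF_mult: "opmult Sg qs (NF Sg qs C L) (NF Sg qs C L') =
   NF Sg qs C (concat (map (\<lambda>(c,e). map (\<lambda>(c',e'). (c*c', e+e')) L') L))"
proof (induct L)
  case Nil
  then show ?case by simp
next
  case (Cons ce L)
  obtain c e where ce: "ce = (c,e)" by fastforce
  have "opmult Sg qs (scl (complex_of_real c) (pw Sg qs C e)) (NF Sg qs C L') =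
        NF Sg qs C (map (\<lambda>(c',e'). (c*c', e+e')) L')"
    unfolding opmult_scl_left pw_NF NF_scl by (simp add: split_def comp_def)
  then show ?case using Cons by (simp add: NF_Cons ce opmult_add_left NF_append)
qed


lemma Y_supp[simp]: "supported Sg qs (sqseq Sg qs C k)"
  by (induct k) (simp_all add: sC)

lemma CY: "opmult Sg qs C (sqseq Sg qs C k) = opmult Sg qs (sqseq Sg qs C k) C"
proof (induct k)
  case 0
  then show ?case by simp
next
  case (Suc k)
  let ?Y = "sqseq Sg qs C k"
  have "opmult Sg qs C (opmult Sg qs ?Y ?Y) = opmult Sg qs (opmult Sg qs ?Y ?Y) C"
    by (metis Suc opmult_assoc)
  then show ?case by (simp add: opmult_scl_left opmult_scl_right opmult_add_left opmult_add_right)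
qed

lemma YY: "opmult Sg qs (sqseq Sg qs C k) (sqseq Sg qs C j) = opmult Sg qs (sqseq Sg qs C j) (sqseq Sg qs C k)"
proof (induct k arbitrary: j)
  case 0
  then show ?case by simp
next
  case (Suc k)
  let ?Y = "sqseq Sg qs C k" and ?Z = "sqseq Sg qs C j"
  have "opmult Sg qs (opmult Sg qs ?Y ?Y) ?Z = opmult Sg qs ?Z (opmult Sg qs ?Y ?Y)"
    by (metis Suc opmult_assoc)
  then show ?case using CY[of j] by (simp add: opmult_scl_left opmult_scl_right opmult_add_left opmult_add_right)
qed

lemma Delta_eq: "opdiff (sqseq Sg qs C (Suc (Suc k))) (sqseq Sg qs C (Suc k)) =
  scl (1/2) (opmult Sg qs (opdiff (sqseq Sg qs C (Suc k)) (sqseq Sg qs C k)) (opadd (sqseq Sg qs C (Suc k)) (sqseq Sg qs C k)))"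
proof -
  let ?P = "sqseq Sg qs C (Suc k)" and ?Q = "sqseq Sg qs C k"
  have c: "opmult Sg qs ?Q ?P = opmult Sg qs ?P ?Q" by (rule YY)
  show ?thesis
    apply (simp only: opmult_diff_left opmult_add_right c)
    apply (subst (1) sqseq.simps(2)) apply (subst (2) sqseq.simps(2))
    by (auto simp: opdiff_def opadd_def scl_def algebra_simps intro!: ext)
qed

lemma nonneg_prod: "\<forall>p\<in>set L. 0 \<le> fst p \<Longrightarrow> \<forall>p\<in>set L'. 0 \<le> fst p \<Longrightarrow>
  \<forall>p\<in>set (concat (map (\<lambda>(c,e). map (\<lambda>(c',e'). (c*c', e+e')) L') L)). 0 \<le> (fst p::real)"
  by (auto simp: split_def)
lemma nonneg_half: "\<forall>p\<in>set M. 0 \<le> fst p \<Longrightarrow> \<forall>p\<in>set (map (\<lambda>(c,e). (1/2*c, e)) M). 0 \<le> (fst p::real)"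
  by (auto simp: split_def)

lemma scl_one[simp]: "scl 1 A = A" unfolding scl_def by simp
lemma opadd_zero_right[simp]: "opadd A opzero = A" unfolding opadd_def opzero_def by simp

lemma NF_C: "NF Sg qs C [(1,1)] = C" by (simp add: NF_Cons idX_right sC)

lemma half_of_real: "(1/2::complex) = complex_of_real (1/2)" by simp

lemma Y_NF: "\<exists>L. (\<forall>p\<in>set L. 0 \<le> fst p) \<and> sqseq Sg qs C k = NF Sg qs C L"
proof (induct k)
  case 0
  then show ?case by (intro exI[of _ "[]"]) simp
next
  case (Suc k)
  then obtain L where L: "\<forall>p\<in>set L. 0 \<le> fst p" "sqseq Sg qs C k = NF Sg qs C L" by blast
  define M where "M = (1,1) # concat (map (\<lambda>(c,e). map (\<lambda>(c',e'). (c*c', e+e')) L) L)"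
  have "sqseq Sg qs C (Suc k) = scl (1/2) (NF Sg qs C M)"
    unfolding M_def using L(2) sC by (simp add: NF_mult[symmetric] NF_Cons idX_right)
  also have "\<dots> = scl (complex_of_real (1/2)) (NF Sg qs C M)" by simp
  also have "\<dots> = NF Sg qs C (map (\<lambda>(c,e). (1/2*c, e)) M)" by (rule NF_scl)
  finally have eq: "sqseq Sg qs C (Suc k) = NF Sg qs C (map (\<lambda>(c,e). (1/2*c, e)) M)" .
  have "\<forall>p\<in>set (map (\<lambda>(c,e). (1/2*c, e)) M). 0 \<le> fst p"
    apply (rule nonneg_half) using nonneg_prod[OF L(1) L(1)] unfolding M_def by simp
  then show ?case using eq by blast
qed

lemma D_NF: "\<exists>L. (\<forall>p\<in>set L. 0 \<le> fst p) \<and> opdiff (sqseq Sg qs C (Suc k)) (sqseq Sg qs C k) = NF Sg qs C L"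
proof (induct k)
  case 0
  have "sqseq Sg qs C (Suc 0) = scl (1/2) C" by simp
  then have "opdiff (sqseq Sg qs C (Suc 0)) (sqseq Sg qs C 0) = NF Sg qs C [(1/2,1)]"
    by (auto simp: NF_Cons idX_right sC opdiff_def scl_def opadd_def opzero_def intro!: ext)
  then show ?case by (intro exI[of _ "[(1/2,1)]"]) simp
next
  case (Suc k)
  then obtain L where L: "\<forall>p\<in>set L. 0 \<le> fst p" "opdiff (sqseq Sg qs C (Suc k)) (sqseq Sg qs C k) = NF Sg qs C L" by blast
  obtain L1 where L1: "\<forall>p\<in>set L1. 0 \<le> fst p" "sqseq Sg qs C (Suc k) = NF Sg qs C L1" using Y_NF by blast
  obtain L2 where L2: "\<forall>p\<in>set L2. 0 \<le> fst p" "sqseq Sg qs C k = NF Sg qs C L2" using Y_NF by blast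
  define M where "M = concat (map (\<lambda>(c,e). map (\<lambda>(c',e'). (c*c', e+e')) (L1 @ L2)) L)"
  have "opdiff (sqseq Sg qs C (Suc (Suc k))) (sqseq Sg qs C (Suc k)) =
     scl (1/2) (opmult Sg qs (NF Sg qs C L) (opadd (sqseq Sg qs C (Suc k)) (sqseq Sg qs C k)))"
    by (simp only: Delta_eq L(2))
  also have "\<dots> = scl (1/2) (opmult Sg qs (NF Sg qs C L) (opadd (NF Sg qs C L1) (NF Sg qs C L2)))"
    by (simp only: L1(2) L2(2))
  also have "\<dots> = scl (1/2) (NF Sg qs C M)"
    unfolding M_def NF_append[symmetric] NF_mult ..
  also have "\<dots> = scl (complex_of_real (1/2)) (NF Sg qs C M)" by simp
  also have "\<dots> = NF Sg qs C (map (\<lambda>(c,e). (1/2*c, e)) M)" by (rule NF_scl)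
  finally have eq: "opdiff (sqseq Sg qs C (Suc (Suc k))) (sqseq Sg qs C (Suc k)) = NF Sg qs C (map (\<lambda>(c,e). (1/2*c, e)) M)" .
  have "\<forall>p\<in>set (map (\<lambda>(c,e). (1/2*c, e)) M). 0 \<le> fst p"
    apply (rule nonneg_half) unfolding M_def apply (rule nonneg_prod[OF L(1)]) using L1(1) L2(1) by auto
  then show ?case using eq by blast
qed

lemma YmYY: assumes sY: "supported Sg qs Y"
  shows "opdiff Y (opmult Sg qs Y Y) = opadd (opmult Sg qs (opmult Sg qs (opdiff (idX Sg qs) Y) Y) (opdiff (idX Sg qs) Y))
            (opmult Sg qs (opmult Sg qs Y (opdiff (idX Sg qs) Y)) Y)"
proof -
  have "opmult Sg qs (opmult Sg qs (opdiff (idX Sg qs) Y) Y) (opdiff (idX Sg qs) Y) =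
     opdiff (opdiff Y (opmult Sg qs Y Y)) (opdiff (opmult Sg qs Y Y) (opmult Sg qs (opmult Sg qs Y Y) Y))"
    using sY by (simp add: opmult_diff_left opmult_diff_right idX_left idX_right)
  moreover have "opmult Sg qs (opmult Sg qs Y (opdiff (idX Sg qs) Y)) Y =
     opdiff (opmult Sg qs Y Y) (opmult Sg qs (opmult Sg qs Y Y) Y)"
    using sY by (simp add: opmult_diff_left opmult_diff_right idX_left idX_right)
  ultimately show ?thesis by (auto simp: opdiff_def opadd_def intro!: ext)
qed

lemma Y_bounds: "psd Sg qs (sqseq Sg qs C k) \<and> psd Sg qs (opdiff (idX Sg qs) (sqseq Sg qs C k))"
proof (induct k)
  case 0
  have "psd Sg qs (opdiff (idX Sg qs) opzero)" using psd_idX by (simp add: opdiff_def opzero_def)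
  then show ?case by simp
next
  case (Suc k)
  let ?Y = "sqseq Sg qs C k" and ?I = "idX Sg qs"
  have sY: "supported Sg qs ?Y" by simp
  have aY: "adj ?Y = ?Y" using herm_adj sY Suc by blast
  have aIY: "adj (opdiff ?I ?Y) = opdiff ?I ?Y" by (simp add: adj_opdiff aY)
  have pYY: "psd Sg qs (opmult Sg qs ?Y ?Y)"
    using psd_sandwich[where M="?I" and K="?Y", OF psd_idX] aY sY by (simp add: idX_right)
  have p1: "psd Sg qs (sqseq Sg qs C (Suc k))" unfolding sqseq.simps by (rule psd_half, rule psd_add[OF pC pYY])
  have t1: "psd Sg qs (opmult Sg qs (opmult Sg qs (opdiff ?I ?Y) ?Y) (opdiff ?I ?Y))"
    using psd_sandwich[where M="?Y" and K="opdiff ?I ?Y"] Suc aIY by simp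
  have t2: "psd Sg qs (opmult Sg qs (opmult Sg qs ?Y (opdiff ?I ?Y)) ?Y)"
    using psd_sandwich[where M="opdiff ?I ?Y" and K="?Y"] Suc aY by simp
  have pD: "psd Sg qs (opdiff ?Y (opmult Sg qs ?Y ?Y))" unfolding YmYY[OF sY] using psd_add t1 t2 by blast
  have eq: "opdiff ?I (sqseq Sg qs C (Suc k)) = scl (1/2) (opadd (opdiff ?I C) (opadd (opdiff ?I ?Y) (opdiff ?Y (opmult Sg qs ?Y ?Y))))"
    by (auto simp: opdiff_def opadd_def scl_def algebra_simps intro!: ext)
  have p2: "psd Sg qs (opdiff ?I (sqseq Sg qs C (Suc k)))"
    unfolding eq using psd_half psd_add bC Suc pD by blast
  show ?case using p1 p2 by blast
qed

lemma Y_mono: "loewner Sg qs (sqseq Sg qs C k) (sqseq Sg qs C (Suc k))"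
  unfolding loewner_def using D_NF NF_psd by metis

lemma Y_bd: "loewner Sg qs (sqseq Sg qs C k) (idX Sg qs)"
  unfolding loewner_def using Y_bounds by blast

definition "Ylim = (\<lambda>x y. lim (\<lambda>n. sqseq Sg qs C n x y))"

lemma Y_conv: "\<forall>x\<in>basis Sg qs. \<forall>y\<in>basis Sg qs. (\<lambda>n. sqseq Sg qs C n x y) \<longlonglongrightarrow> Ylim x y"
  unfolding Ylim_def by (rule mono_lim[where R="\<lambda>n. sqseq Sg qs C n" and B="idX Sg qs", OF Y_mono Y_bd]) (use Y_bounds in blast)

lemma Ylim_supp: "supported Sg qs Ylim"
  unfolding supported_def
proof (intro allI impI)
  fix x y assume "x \<notin> basis Sg qs \<or> y \<notin> basis Sg qs"
  then have "(\<lambda>n. sqseq Sg qs C n x y) = (\<lambda>n. 0)" using Y_supp unfolding supported_def by blast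
  then show "Ylim x y = 0" unfolding Ylim_def by (simp add: limI)
qed

lemma Ylim_fix: "Ylim = scl (1/2) (opadd C (opmult Sg qs Ylim Ylim))"
proof (rule supported_eq[of Sg qs])
  show "supported Sg qs Ylim" by (rule Ylim_supp)
  show "supported Sg qs (scl (1/2) (opadd C (opmult Sg qs Ylim Ylim)))" using Ylim_supp sC by simp
  show "eqon Sg qs Ylim (scl (1/2) (opadd C (opmult Sg qs Ylim Ylim)))"
    unfolding eqon_def
  proof (intro ballI)
    fix x y assume x: "x \<in> basis Sg qs" and y: "y \<in> basis Sg qs"
    have a: "(\<lambda>n. sqseq Sg qs C (Suc n) x y) \<longlonglongrightarrow> Ylim x y" using Y_conv x y LIMSEQ_Suc by blast
    have "(\<lambda>n. opmult Sg qs (sqseq Sg qs C n) (sqseq Sg qs C n) x y) \<longlonglongrightarrow> opmult Sg qs Ylim Ylim x y"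
      by (rule opmult_tendsto[OF Y_conv Y_conv x y])
    then have "(\<lambda>n. sqseq Sg qs C (Suc n) x y) \<longlonglongrightarrow> scl (1/2) (opadd C (opmult Sg qs Ylim Ylim)) x y"
      unfolding sqseq.simps scl_def opadd_def by (intro tendsto_intros)
    then show "Ylim x y = scl (1/2) (opadd C (opmult Sg qs Ylim Ylim)) x y" using a LIMSEQ_unique by blast
  qed
qed

lemma sqrt_S: "supported Sg qs (opdiff (idX Sg qs) Ylim) \<and> psd Sg qs (opdiff (idX Sg qs) Ylim) \<and>
   opmult Sg qs (opdiff (idX Sg qs) Ylim) (opdiff (idX Sg qs) Ylim) = opdiff (idX Sg qs) C"
proof (intro conjI)
  show "supported Sg qs (opdiff (idX Sg qs) Ylim)" using Ylim_supp by simp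
  show "psd Sg qs (opdiff (idX Sg qs) Ylim)"
    by (rule psd_limit[OF tendsto_opdiff[OF Y_conv]]) (use Y_bounds in blast)
  have h: "Ylim x y = 1/2 * (C x y + opmult Sg qs Ylim Ylim x y)" for x y
    using fun_cong[OF fun_cong[OF Ylim_fix, of x], of y] unfolding scl_def opadd_def .
  have f: "opmult Sg qs Ylim Ylim = opdiff (scl 2 Ylim) C"
  proof (intro ext)
    fix x y show "opmult Sg qs Ylim Ylim x y = opdiff (scl 2 Ylim) C x y"
      using h[of x y] unfolding opdiff_def scl_def by (simp add: field_simps)
  qed
  show "opmult Sg qs (opdiff (idX Sg qs) Ylim) (opdiff (idX Sg qs) Ylim) = opdiff (idX Sg qs) C"
    using Ylim_supp by (simp add: opmult_diff_left opmult_diff_right idX_left idX_right f)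
       (auto simp: opdiff_def scl_def intro!: ext)
qed

end

lemma sqrt_exists:
  fixes Sg :: "'v::finite \<Rightarrow> 'a::{finite,zero} set"
  assumes "psd Sg qs A" "loewner Sg qs A opId"
  shows "\<exists>S. supported Sg qs S \<and> psd Sg qs S \<and> (\<forall>x\<in>basis Sg qs. \<forall>y\<in>basis Sg qs. opmult Sg qs S S x y = A x y)"
proof -
  let ?C = "cutX Sg qs (opdiff opId A)"
  have sC: "supported Sg qs ?C" by simp
  have pC: "psd Sg qs ?C" using assms(2) psd_cong[OF eqon_cutX] unfolding loewner_def by blast
  have e: "eqon Sg qs (opdiff (idX Sg qs) ?C) A" unfolding eqon_def cutX_def opdiff_def by simp
  have bC: "psd Sg qs (opdiff (idX Sg qs) ?C)" using psd_cong[OF e] assms(1) by blast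
  note r = sqrt_S[OF sC pC bC]
  show ?thesis
    apply (rule exI[of _ "opdiff (idX Sg qs) (Ylim Sg qs ?C)"])
    using r e unfolding eqon_def by auto
qed

lemma sqrt_unique:
  fixes Sg :: "'v::finite \<Rightarrow> 'a::{finite,zero} set"
  assumes sS: "supported Sg qs S" and pS: "psd Sg qs S" and sT: "supported Sg qs T" and pT: "psd Sg qs T"
    and e: "eqon Sg qs (opmult Sg qs S S) (opmult Sg qs T T)"
  shows "S = T"
proof -
  have aS: "adj S = S" using herm_adj sS pS by blast
  have aT: "adj T = T" using herm_adj sT pT by blast
  have ST: "opmult Sg qs S S = opmult Sg qs T T" using supported_eq[OF _ _ e] sS sT by simp
  define D where "D = opdiff S T"
  define E where "E = opadd S T"
  have sD: "supported Sg qs D" unfolding D_def using sS sT by simp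
  have aD: "adj D = D" unfolding D_def by (simp add: adj_opdiff aS aT)
  have DE: "opmult Sg qs D E = opdiff (opmult Sg qs S T) (opmult Sg qs T S)"
    unfolding D_def E_def by (simp add: opmult_diff_left opmult_add_right ST) (auto simp: opdiff_def opadd_def intro!: ext)
  have ED: "opmult Sg qs E D = scl (-1) (opmult Sg qs D E)"
    unfolding DE unfolding D_def E_def
    by (simp add: opmult_diff_right opmult_add_left ST) (auto simp: opdiff_def opadd_def scl_def intro!: ext)
  define t where "t = tr Sg qs (opmult Sg qs (opmult Sg qs D E) D)"
  have "t = tr Sg qs (opmult Sg qs (opmult Sg qs E D) D)"
    unfolding t_def using tr_cyclic[of Sg qs D "opmult Sg qs E D"] by (simp add: opmult_assoc)
  also have "\<dots> = - t" unfolding ED opmult_scl_left tr_scl t_def by simp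
  finally have t0: "t = 0" by simp
  have DED: "opmult Sg qs (opmult Sg qs D E) D = opadd (opmult Sg qs (opmult Sg qs D S) (adj D)) (opmult Sg qs (opmult Sg qs D T) (adj D))"
    unfolding aD E_def by (simp add: opmult_add_right opmult_add_left)
  have p1: "psd Sg qs (opmult Sg qs (opmult Sg qs D S) (adj D))" by (rule psd_sandwich[OF pS])
  have p2: "psd Sg qs (opmult Sg qs (opmult Sg qs D T) (adj D))" by (rule psd_sandwich[OF pT])
  have tt: "tr Sg qs (opmult Sg qs (opmult Sg qs D S) (adj D)) + tr Sg qs (opmult Sg qs (opmult Sg qs D T) (adj D)) = 0"
    using t0 unfolding t_def DED tr_add .
  have r1: "tr Sg qs (opmult Sg qs (opmult Sg qs D S) (adj D)) = 0" and r2: "tr Sg qs (opmult Sg qs (opmult Sg qs D T) (adj D)) = 0"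
    using psd_tr[OF p1] psd_tr[OF p2] tt by (auto simp: complex_eq_iff)
  have z1: "opmult Sg qs (opmult Sg qs D S) (adj D) = opzero"
    using supported_eq[OF _ _ psd_tr0[OF p1 r1]] sD sS by simp
  have z2: "opmult Sg qs (opmult Sg qs D T) (adj D) = opzero"
    using supported_eq[OF _ _ psd_tr0[OF p2 r2]] sD sT by simp
  have DDD: "opmult Sg qs (opmult Sg qs D D) D = opzero"
  proof -
    have "opmult Sg qs (opmult Sg qs D D) D = opdiff (opmult Sg qs (opmult Sg qs D S) (adj D)) (opmult Sg qs (opmult Sg qs D T) (adj D))"
      unfolding aD by (simp add: D_def[symmetric] opmult_diff_left[symmetric] opmult_diff_right[symmetric])
    then show ?thesis using z1 z2 by (simp add: opdiff_def opzero_def)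
  qed
  have H: "opmult Sg qs D D = opzero"
  proof (rule herm_sq0)
    show "supported Sg qs (opmult Sg qs D D)" using sD by simp
    show "adj (opmult Sg qs D D) = opmult Sg qs D D" by (simp add: adj_opmult aD)
    show "opmult Sg qs (opmult Sg qs D D) (opmult Sg qs D D) = opzero"
      by (metis DDD opmult_assoc opmult_zero_right)
  qed
  have "D = opzero" by (rule herm_sq0[OF sD aD H])
  then show ?thesis unfolding D_def by (auto simp: opdiff_def opzero_def fun_eq_iff)
qed

lemma opsqrt_props:
  fixes Sg :: "'v::finite \<Rightarrow> 'a::{finite,zero} set"
  assumes "psd Sg qs A" "loewner Sg qs A opId"
  shows "supported Sg qs (opsqrt Sg qs A) \<and> psd Sg qs (opsqrt Sg qs A) \<and>
     (\<forall>x\<in>basis Sg qs. \<forall>y\<in>basis Sg qs. opmult Sg qs (opsqrt Sg qs A) (opsqrt Sg qs A) x y = A x y)"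
proof -
  have ex1: "\<exists>!S. supported Sg qs S \<and> psd Sg qs S \<and> (\<forall>x\<in>basis Sg qs. \<forall>y\<in>basis Sg qs. opmult Sg qs S S x y = A x y)"
  proof (rule ex_ex1I)
    show "\<exists>S. supported Sg qs S \<and> psd Sg qs S \<and> (\<forall>x\<in>basis Sg qs. \<forall>y\<in>basis Sg qs. opmult Sg qs S S x y = A x y)"
      by (rule sqrt_exists[OF assms])
  next
    fix S T assume "supported Sg qs S \<and> psd Sg qs S \<and> (\<forall>x\<in>basis Sg qs. \<forall>y\<in>basis Sg qs. opmult Sg qs S S x y = A x y)"
      "supported Sg qs T \<and> psd Sg qs T \<and> (\<forall>x\<in>basis Sg qs. \<forall>y\<in>basis Sg qs. opmult Sg qs T T x y = A x y)"
    then show "S = T" by (intro sqrt_unique[of Sg qs]) (auto simp: eqon_def)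
  qed
  show ?thesis unfolding opsqrt_def by (rule theI'[OF ex1])
qed


definition agree :: "'v set \<Rightarrow> ('v \<Rightarrow> 'a) \<Rightarrow> ('v \<Rightarrow> 'a) \<Rightarrow> bool" where
  "agree qs x y \<longleftrightarrow> (\<forall>q. q \<notin> qs \<longrightarrow> x q = y q)"

context fixes Sg :: "'v::finite \<Rightarrow> 'a::{finite,zero} set" begin

lemma lift_def': "lift qs A x y = (if agree qs x y then A (restr qs x) (restr qs y) else 0)"
  unfolding lift_def agree_def ..

lemma restr_basis: "x \<in> basis Sg UNIV \<Longrightarrow> restr qs x \<in> basis Sg qs"
  unfolding basis_def restr_def by auto

lemma lift_mult: assumes x: "x \<in> basis Sg UNIV" and y: "y \<in> basis Sg UNIV"
  shows "opmult Sg UNIV (lift qs A) (lift qs B) x y = lift qs (opmult Sg qs A B) x y"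
proof (cases "agree qs x y")
  case False
  have z: "lift qs A x z * lift qs B z y = 0" for z
    using False unfolding lift_def' agree_def by auto
  have "opmult Sg UNIV (lift qs A) (lift qs B) x y = 0" unfolding opmult_def by (rule sum.neutral) (use z in blast)
  then show ?thesis using False unfolding lift_def' by simp
next
  case True
  let ?Z = "{z\<in>basis Sg UNIV. agree qs x z}"
  let ?G = "\<lambda>z. lift qs A x z * lift qs B z y"
  define e where "e = (\<lambda>w q. if q \<in> qs then w q else x q)"
  have "opmult Sg UNIV (lift qs A) (lift qs B) x y = sum ?G (basis Sg UNIV)" unfolding opmult_def ..
  also have "\<dots> = sum ?G ?Z"
    by (rule sum.mono_neutral_right) (auto simp: lift_def')
  also have "\<dots> = (\<Sum>w\<in>basis Sg qs. ?G (e w))"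
  proof (rule sum.reindex_bij_betw[symmetric])
    show "bij_betw e (basis Sg qs) ?Z"
    proof (rule bij_betw_byWitness[where f' = "restr qs"])
      show "e ` basis Sg qs \<subseteq> ?Z" using x unfolding e_def basis_def agree_def by auto
      show "restr qs ` ?Z \<subseteq> basis Sg qs" using restr_basis by auto
      show "\<forall>w\<in>basis Sg qs. restr qs (e w) = w"
        unfolding e_def restr_def basis_def by (auto simp: fun_eq_iff)
      show "\<forall>z\<in>?Z. e (restr qs z) = z"
        unfolding e_def restr_def agree_def by (auto simp: fun_eq_iff)
    qed
  qed
  also have "\<dots> = (\<Sum>w\<in>basis Sg qs. A (restr qs x) w * B w (restr qs y))"
  proof (rule sum.cong[OF refl])
    fix w assume w: "w \<in> basis Sg qs"
    have r: "restr qs (e w) = w" using w unfolding e_def restr_def basis_def by auto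
    have a1: "agree qs x (e w)" unfolding e_def agree_def by auto
    have a2: "agree qs (e w) y" using True unfolding e_def agree_def by auto
    show "?G (e w) = A (restr qs x) w * B w (restr qs y)" using r a1 a2 unfolding lift_def' by simp
  qed
  also have "\<dots> = lift qs (opmult Sg qs A B) x y" using True unfolding lift_def' opmult_def by simp
  finally show ?thesis .
qed

lemma eqon_lift_mult: "eqon Sg UNIV (opmult Sg UNIV (lift qs A) (lift qs B)) (lift qs (opmult Sg qs A B))"
  unfolding eqon_def using lift_mult by blast

lemma adj_lift: "adj (lift qs A) = lift qs (adj A)"
  unfolding adj_def lift_def' agree_def by (auto intro!: ext)

lemma lift_opId: "lift qs opId = opId"
  unfolding lift_def' opId_def agree_def restr_def by (auto intro!: ext simp: fun_eq_iff)

lemma lift_opadd: "lift qs (opadd A B) = opadd (lift qs A) (lift qs B)"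
  unfolding lift_def' opadd_def by (auto intro!: ext)
lemma lift_opdiff: "lift qs (opdiff A B) = opdiff (lift qs A) (lift qs B)"
  unfolding lift_def' opdiff_def by (auto intro!: ext)
lemma lift_opzero: "lift qs opzero = opzero"
  unfolding lift_def' opzero_def by (auto intro!: ext)

lemma lift_cong: "eqon Sg qs A B \<Longrightarrow> eqon Sg UNIV (lift qs A) (lift qs B)"
  unfolding eqon_def lift_def' using restr_basis by auto

lemma lift_sum_list: "lift qs (\<lambda>x y. sum_list (map (\<lambda>M. M x y) Ms)) = (\<lambda>x y. sum_list (map (\<lambda>M. lift qs M x y) Ms))"
  unfolding lift_def' by (induct Ms) (auto intro!: ext)

lemma lift_sum: "lift qs (\<lambda>a b. \<Sum>x\<in>S. F x a b) = (\<lambda>a b. \<Sum>x\<in>S. lift qs (F x) a b)"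
  unfolding lift_def' by (auto intro!: ext)

lemma sqrt_adj: assumes "psd Sg qs M" "loewner Sg qs M opId"
  shows "adj (opsqrt Sg qs M) = opsqrt Sg qs M"
  using opsqrt_props[OF assms] herm_adj by blast

lemma K_adj: assumes "psd Sg qs M" "loewner Sg qs M opId"
  shows "adj (lift qs (opsqrt Sg qs M)) = lift qs (opsqrt Sg qs M)"
  using sqrt_adj[OF assms] adj_lift by metis

lemma K_sq: assumes "psd Sg qs M" "loewner Sg qs M opId"
  shows "eqon Sg UNIV (opmult Sg UNIV (lift qs (opsqrt Sg qs M)) (lift qs (opsqrt Sg qs M))) (lift qs M)"
proof -
  have "eqon Sg qs (opmult Sg qs (opsqrt Sg qs M) (opsqrt Sg qs M)) M"
    using opsqrt_props[OF assms] unfolding eqon_def by blast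
  then show ?thesis using eqon_lift_mult lift_cong eqon_trans by blast
qed

lemma trace_tr: "trace Sg A = tr Sg UNIV A" unfolding trace_def tr_def ..

lemma dual_sandwich: "tr Sg UNIV (opmult Sg UNIV Q (sandwich Sg K \<rho>)) = tr Sg UNIV (opmult Sg UNIV (sandwich Sg (adj K) Q) \<rho>)"
proof -
  have "tr Sg UNIV (opmult Sg UNIV Q (sandwich Sg K \<rho>)) =
     tr Sg UNIV (opmult Sg UNIV (opmult Sg UNIV (opmult Sg UNIV Q K) \<rho>) (adj K))"
    unfolding sandwich_def by (simp add: opmult_assoc)
  also have "\<dots> = tr Sg UNIV (opmult Sg UNIV (adj K) (opmult Sg UNIV (opmult Sg UNIV Q K) \<rho>))"
    by (rule tr_cyclic)
  also have "\<dots> = tr Sg UNIV (opmult Sg UNIV (sandwich Sg (adj K) Q) \<rho>)"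
    unfolding sandwich_def by (simp add: opmult_assoc)
  finally show ?thesis .
qed

lemma psd_sandwich': "psd Sg UNIV M \<Longrightarrow> psd Sg UNIV (sandwich Sg K M)"
  unfolding sandwich_def by (rule psd_sandwich)

lemma trpos: assumes "psd Sg UNIV D" "loewner Sg UNIV D opId" "psd Sg UNIV \<rho>"
  shows "Im (tr Sg UNIV (opmult Sg UNIV D \<rho>)) = 0 \<and> 0 \<le> Re (tr Sg UNIV (opmult Sg UNIV D \<rho>))"
proof -
  let ?S = "opsqrt Sg UNIV D"
  note p = opsqrt_props[OF assms(1,2)]
  have aS: "adj ?S = ?S" using p herm_adj by blast
  have e: "eqon Sg UNIV (opmult Sg UNIV ?S ?S) D" using p unfolding eqon_def by blast
  have "tr Sg UNIV (opmult Sg UNIV D \<rho>) = tr Sg UNIV (opmult Sg UNIV (opmult Sg UNIV ?S ?S) \<rho>)"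
    by (rule tr_cong, rule opmult_cong[OF eqon_sym[OF e] eqon_refl])
  also have "\<dots> = tr Sg UNIV (opmult Sg UNIV ?S (opmult Sg UNIV ?S \<rho>))" by (simp add: opmult_assoc)
  also have "\<dots> = tr Sg UNIV (opmult Sg UNIV (opmult Sg UNIV ?S \<rho>) (adj ?S))" by (simp add: tr_cyclic aS)
  finally show ?thesis using psd_tr[OF psd_sandwich[OF assms(3)]] by simp
qed

lemma tr_loewner:
  assumes h: "\<And>\<psi>. Im (qf Sg UNIV P \<psi>) = 0" "\<And>\<psi>. Im (qf Sg UNIV W \<psi>) = 0"
    and le: "\<And>\<rho>. pstate Sg \<rho> \<Longrightarrow> Re (tr Sg UNIV (opmult Sg UNIV P \<rho>)) \<le> Re (tr Sg UNIV (opmult Sg UNIV W \<rho>))"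
  shows "loewner Sg UNIV P W"
  unfolding loewner_qf
proof
  fix \<psi>
  let ?X = "basis Sg UNIV"
  define c :: real where "c = 1 / (1 + (\<Sum>x\<in>?X. (cmod (\<psi> x))\<^sup>2))"
  have n0: "0 \<le> (\<Sum>x\<in>?X. (cmod (\<psi> x))\<^sup>2)" by (simp add: sum_nonneg)
  have c0: "0 < c" unfolding c_def using n0 by simp
  define \<rho> where "\<rho> = (\<lambda>x y. complex_of_real c * \<psi> x * cnj (\<psi> y))"
  have qr: "qf Sg UNIV \<rho> \<phi> = complex_of_real c * ((\<Sum>x\<in>?X. cnj (\<phi> x) * \<psi> x) * cnj (\<Sum>x\<in>?X. cnj (\<phi> x) * \<psi> x))" for \<phi>
    unfolding qf_def \<rho>_def by (simp add: sum_distrib_left sum_distrib_right algebra_simps)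
  have qr2: "qf Sg UNIV \<rho> \<phi> = complex_of_real (c * (cmod (\<Sum>x\<in>?X. cnj (\<phi> x) * \<psi> x))\<^sup>2)" for \<phi>
    unfolding qr by (metis complex_norm_square of_real_mult)
  have ps: "psd Sg UNIV \<rho>"
    unfolding psd_qf qr2 using c0 by simp
  have trr: "tr Sg UNIV \<rho> = complex_of_real (c * (\<Sum>x\<in>?X. (cmod (\<psi> x))\<^sup>2))"
    unfolding tr_def \<rho>_def by (simp add: sum_distrib_left mult.assoc complex_norm_square[symmetric])
  have "c * (\<Sum>x\<in>?X. (cmod (\<psi> x))\<^sup>2) \<le> 1" unfolding c_def using n0 by (simp add: field_simps)
  then have pst: "pstate Sg \<rho>" unfolding pstate_def trace_tr using ps trr by simp
  have trq: "tr Sg UNIV (opmult Sg UNIV A \<rho>) = complex_of_real c * qf Sg UNIV A \<psi>" for A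
    unfolding tr_def opmult_def \<rho>_def qf_def
    by (simp add: sum_distrib_left algebra_simps)
  have "Re (complex_of_real c * qf Sg UNIV P \<psi>) \<le> Re (complex_of_real c * qf Sg UNIV W \<psi>)"
    using le[OF pst] unfolding trq .
  then have "Re (qf Sg UNIV P \<psi>) \<le> Re (qf Sg UNIV W \<psi>)" using c0 by simp
  then show "Im (qf Sg UNIV P \<psi>) = Im (qf Sg UNIV W \<psi>) \<and> Re (qf Sg UNIV P \<psi>) \<le> Re (qf Sg UNIV W \<psi>)"
    using h by simp
qed

end


fun wp :: "('v \<Rightarrow> 'a set) \<Rightarrow> ('v,'a::zero) prog \<Rightarrow> ('v,'a) op \<Rightarrow> ('v,'a) op" where
  "wp Sg Skip Q = Q"
| "wp Sg (Init qs) Q = (\<lambda>a b. \<Sum>x\<in>basis Sg qs. sandwich Sg (adj (lift qs (ketbra0 x))) Q a b)"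
| "wp Sg (Unit qs U) Q = sandwich Sg (adj (lift qs U)) Q"
| "wp Sg (Seq S1 S2) Q = wp Sg S1 (wp Sg S2 Q)"
| "wp Sg (Repeat N S) Q = ((\<lambda>R. wp Sg S R) ^^ N) Q"
| "wp Sg (Case qs bs) Q = (\<lambda>a b. sum_list (map (\<lambda>b'. meas_map Sg qs (fst b') (wp Sg (snd b') Q) a b) bs))"
| "wp Sg (While qs B S) Q = opadd (meas_map Sg qs (opdiff opId B) Q)
     (meas_map Sg qs B (\<lambda>x y. lim (\<lambda>n. ((\<lambda>R. wp Sg S (opadd (meas_map Sg qs (opdiff opId B) Q) (meas_map Sg qs B R))) ^^ n) opzero x y)))"
| "wp Sg (Hole F) Q = opzero"

definition semok :: "('v \<Rightarrow> 'a set) \<Rightarrow> ('v,'a::zero) prog \<Rightarrow> bool" where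
  "semok Sg S \<longleftrightarrow> (\<forall>Q. is_pred Sg Q \<longrightarrow> is_pred Sg (wp Sg S Q)) \<and>
     (\<forall>Q \<rho>. is_pred Sg Q \<longrightarrow> psd Sg UNIV \<rho> \<longrightarrow>
        tr Sg UNIV (opmult Sg UNIV Q (denot Sg S \<rho>)) = tr Sg UNIV (opmult Sg UNIV (wp Sg S Q) \<rho>)) \<and>
     (\<forall>\<rho>. psd Sg UNIV \<rho> \<longrightarrow> psd Sg UNIV (denot Sg S \<rho>))"

context fixes Sg :: "'v::finite \<Rightarrow> 'a::{finite,zero} set" begin

lemma opdiff_zero_right[simp]: "opdiff A opzero = A" unfolding opdiff_def opzero_def by simp

lemma is_pred_iff: "is_pred Sg Q \<longleftrightarrow> psd Sg UNIV Q \<and> psd Sg UNIV (opdiff opId Q)"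
  unfolding is_pred_def loewner_def by simp

lemma sandwich_diff: "sandwich Sg K (opdiff A B) = opdiff (sandwich Sg K A) (sandwich Sg K B)"
  unfolding sandwich_def by (simp add: opmult_diff_left opmult_diff_right)

lemma sandwich_add: "sandwich Sg K (opadd A B) = opadd (sandwich Sg K A) (sandwich Sg K B)"
  unfolding sandwich_def by (simp add: opmult_add_left opmult_add_right)

lemma sandwich_zero[simp]: "sandwich Sg K opzero = opzero"
  unfolding sandwich_def by simp

lemma sandwich_opId: "eqon Sg UNIV (sandwich Sg K opId) (opmult Sg UNIV K (adj K))"
  unfolding sandwich_def by (rule opmult_cong[OF eqon_opId_right eqon_refl])

lemma sandwich_cong: "eqon Sg UNIV A B \<Longrightarrow> eqon Sg UNIV (sandwich Sg K A) (sandwich Sg K B)"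
  unfolding sandwich_def by (intro opmult_cong eqon_refl)

lemma psd_eqon: "eqon Sg qs A B \<Longrightarrow> psd Sg qs B \<Longrightarrow> psd Sg qs A"
  using psd_cong by blast

lemma pred_qf_im: "is_pred Sg Q \<Longrightarrow> Im (qf Sg UNIV Q \<psi>) = 0"
  unfolding is_pred_iff psd_qf by blast

lemma tr_diff_pos: assumes "is_pred Sg Q" "is_pred Sg Q'" "loewner Sg UNIV Q Q'" "psd Sg UNIV \<sigma>"
  shows "Re (tr Sg UNIV (opmult Sg UNIV Q \<sigma>)) \<le> Re (tr Sg UNIV (opmult Sg UNIV Q' \<sigma>))"
proof -
  have p: "psd Sg UNIV (opdiff Q' Q)" using assms(3) unfolding loewner_def .
  have e: "eqon Sg UNIV (opdiff opId (opdiff Q' Q)) (opadd (opdiff opId Q') Q)"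
    unfolding eqon_def opdiff_def opadd_def by simp
  have "psd Sg UNIV (opadd (opdiff opId Q') Q)" using psd_add assms(1,2) unfolding is_pred_iff by blast
  then have l: "loewner Sg UNIV (opdiff Q' Q) opId" unfolding loewner_def using psd_eqon[OF e] by blast
  have "0 \<le> Re (tr Sg UNIV (opmult Sg UNIV (opdiff Q' Q) \<sigma>))" using trpos[OF p l assms(4)] by blast
  then show ?thesis by (simp add: opmult_diff_left tr_diff)
qed

lemma semok_pred: "semok Sg S \<Longrightarrow> is_pred Sg Q \<Longrightarrow> is_pred Sg (wp Sg S Q)"
  unfolding semok_def by blast
lemma semok_dual: "semok Sg S \<Longrightarrow> is_pred Sg Q \<Longrightarrow> psd Sg UNIV \<rho> \<Longrightarrow>
   tr Sg UNIV (opmult Sg UNIV Q (denot Sg S \<rho>)) = tr Sg UNIV (opmult Sg UNIV (wp Sg S Q) \<rho>)"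
  unfolding semok_def by blast
lemma semok_psd: "semok Sg S \<Longrightarrow> psd Sg UNIV \<rho> \<Longrightarrow> psd Sg UNIV (denot Sg S \<rho>)"
  unfolding semok_def by blast

lemma semok_mono: assumes s: "semok Sg S" and q: "is_pred Sg Q" "is_pred Sg Q'" "loewner Sg UNIV Q Q'"
  shows "loewner Sg UNIV (wp Sg S Q) (wp Sg S Q')"
proof (rule tr_loewner)
  show "Im (qf Sg UNIV (wp Sg S Q) \<psi>) = 0" "Im (qf Sg UNIV (wp Sg S Q') \<psi>) = 0" for \<psi>
    using pred_qf_im semok_pred[OF s] q by blast+
  fix \<rho> assume "pstate Sg \<rho>"
  then have p: "psd Sg UNIV \<rho>" unfolding pstate_def by blast
  have "Re (tr Sg UNIV (opmult Sg UNIV Q (denot Sg S \<rho>))) \<le> Re (tr Sg UNIV (opmult Sg UNIV Q' (denot Sg S \<rho>)))"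
    by (rule tr_diff_pos[OF q semok_psd[OF s p]])
  then show "Re (tr Sg UNIV (opmult Sg UNIV (wp Sg S Q) \<rho>)) \<le> Re (tr Sg UNIV (opmult Sg UNIV (wp Sg S Q') \<rho>))"
    unfolding semok_dual[OF s q(1) p] semok_dual[OF s q(2) p] .
qed

section \<open>Skip, Unit, Seq, Repeat\<close>

lemma semok_Skip: "semok Sg Skip" unfolding semok_def by simp

lemma semok_Seq: "semok Sg S1 \<Longrightarrow> semok Sg S2 \<Longrightarrow> semok Sg (Seq S1 S2)"
  unfolding semok_def by simp

lemma semok_Repeat: "semok Sg S \<Longrightarrow> semok Sg (Repeat N S)"
proof (induct N)
  case 0
  then show ?case unfolding semok_def by simp
next
  case (Suc N)
  have "semok Sg (Seq (Repeat N S) S)" by (rule semok_Seq[OF Suc(1)[OF Suc(2)] Suc(2)])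
  moreover have "denot Sg (Repeat (Suc N) S) = denot Sg (Seq (Repeat N S) S)"
    by (simp add: funpow_Suc_right)
  moreover have "wp Sg (Repeat (Suc N) S) = wp Sg (Seq (Repeat N S) S)"
    by (rule ext, simp only: wp.simps funpow_Suc_right comp_def)
  ultimately show ?case unfolding semok_def by metis
qed

lemma unitary_adj: "unitary Sg qs U \<Longrightarrow> eqon Sg qs (opmult Sg qs (adj U) U) opId"
  unfolding unitary_def eqon_def by blast

lemma semok_Unit: assumes u: "unitary Sg qs U" shows "semok Sg (Unit qs U)"
proof -
  let ?L = "adj (lift qs U)"
  have e1: "eqon Sg UNIV (sandwich Sg ?L opId) opId"
  proof -
    have "eqon Sg UNIV (sandwich Sg ?L opId) (opmult Sg UNIV ?L (adj ?L))" by (rule sandwich_opId)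
    moreover have "opmult Sg UNIV ?L (adj ?L) = opmult Sg UNIV (lift qs (adj U)) (lift qs U)" by (simp add: adj_lift)
    moreover have "eqon Sg UNIV (opmult Sg UNIV (lift qs (adj U)) (lift qs U)) (lift qs (opmult Sg qs (adj U) U))"
      by (rule eqon_lift_mult)
    moreover have "eqon Sg UNIV (lift qs (opmult Sg qs (adj U) U)) opId"
      using lift_cong[OF unitary_adj[OF u]] lift_opId by metis
    ultimately show ?thesis using eqon_trans by metis
  qed
  have pr: "is_pred Sg (sandwich Sg ?L Q)" if "is_pred Sg Q" for Q
  proof -
    have "eqon Sg UNIV (opdiff opId (sandwich Sg ?L Q)) (sandwich Sg ?L (opdiff opId Q))"
      using e1 unfolding sandwich_diff by (simp add: eqon_def opdiff_def)
    then show ?thesis using that unfolding is_pred_iff by (meson psd_eqon psd_sandwich')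
  qed
  show ?thesis unfolding semok_def denot.simps wp.simps
    using pr dual_sandwich psd_sandwich' by blast
qed

end


context fixes Sg :: "'v::finite \<Rightarrow> 'a::{finite,zero} set" begin

lemma opmult_sum_right: "opmult Sg qs Q (\<lambda>a b. \<Sum>x\<in>S. F x a b) = (\<lambda>a b. \<Sum>x\<in>S. opmult Sg qs Q (F x) a b)"
  unfolding opmult_def sum_distrib_left by (intro ext) (rule sum.swap)
lemma opmult_sum_left: "opmult Sg qs (\<lambda>a b. \<Sum>x\<in>S. F x a b) Q = (\<lambda>a b. \<Sum>x\<in>S. opmult Sg qs (F x) Q a b)"
  unfolding opmult_def sum_distrib_right by (intro ext) (rule sum.swap)
lemma tr_sum: "tr Sg qs (\<lambda>a b. \<Sum>x\<in>S. F x a b) = (\<Sum>x\<in>S. tr Sg qs (F x))"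
  unfolding tr_def by (rule sum.swap)
lemma qf_sum: "qf Sg qs (\<lambda>a b. \<Sum>x\<in>S. F x a b) \<psi> = (\<Sum>x\<in>S. qf Sg qs (F x) \<psi>)"
proof -
  have "qf Sg qs (\<lambda>a b. \<Sum>x\<in>S. F x a b) \<psi> = (\<Sum>a\<in>basis Sg qs. \<Sum>b\<in>basis Sg qs. \<Sum>x\<in>S. cnj (\<psi> a) * F x a b * \<psi> b)"
    unfolding qf_def by (simp add: sum_distrib_left sum_distrib_right)
  also have "\<dots> = (\<Sum>a\<in>basis Sg qs. \<Sum>x\<in>S. \<Sum>b\<in>basis Sg qs. cnj (\<psi> a) * F x a b * \<psi> b)"
    by (rule sum.cong[OF refl], rule sum.swap)
  also have "\<dots> = (\<Sum>x\<in>S. qf Sg qs (F x) \<psi>)" unfolding qf_def by (rule sum.swap)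
  finally show ?thesis .
qed
lemma psd_sum: "(\<And>x. x \<in> S \<Longrightarrow> psd Sg qs (F x)) \<Longrightarrow> psd Sg qs (\<lambda>a b. \<Sum>x\<in>S. F x a b)"
  unfolding psd_qf qf_sum by (simp add: Im_sum Re_sum sum_nonneg)
lemma eqon_sum: "(\<And>x. x \<in> S \<Longrightarrow> eqon Sg qs (F x) (G x)) \<Longrightarrow> eqon Sg qs (\<lambda>a b. \<Sum>x\<in>S. F x a b) (\<lambda>a b. \<Sum>x\<in>S. G x a b)"
  unfolding eqon_def by simp

lemma sl_as_sum: "(\<lambda>a b. sum_list (map (\<lambda>x. F x a b) L)) = (\<lambda>a b. \<Sum>i\<in>{..<length L}. F (L!i) a b)"
  by (simp add: sum_list_sum_nth atLeast0LessThan)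

lemma opmult_sl_right: "opmult Sg qs Q (\<lambda>a b. sum_list (map (\<lambda>x. F x a b) L)) = (\<lambda>a b. sum_list (map (\<lambda>x. opmult Sg qs Q (F x) a b) L))"
  unfolding sl_as_sum opmult_sum_right ..
lemma opmult_sl_left: "opmult Sg qs (\<lambda>a b. sum_list (map (\<lambda>x. F x a b) L)) Q = (\<lambda>a b. sum_list (map (\<lambda>x. opmult Sg qs (F x) Q a b) L))"
  unfolding sl_as_sum opmult_sum_left ..
lemma tr_sl: "tr Sg qs (\<lambda>a b. sum_list (map (\<lambda>x. F x a b) L)) = sum_list (map (\<lambda>x. tr Sg qs (F x)) L)"
  unfolding sl_as_sum tr_sum by (simp add: sum_list_sum_nth atLeast0LessThan)
lemma psd_sl: "(\<And>x. x \<in> set L \<Longrightarrow> psd Sg qs (F x)) \<Longrightarrow> psd Sg qs (\<lambda>a b. sum_list (map (\<lambda>x. F x a b) L))"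
  unfolding sl_as_sum by (rule psd_sum) auto
lemma eqon_sl: "(\<And>x. x \<in> set L \<Longrightarrow> eqon Sg qs (F x) (G x)) \<Longrightarrow>
   eqon Sg qs (\<lambda>a b. sum_list (map (\<lambda>x. F x a b) L)) (\<lambda>a b. sum_list (map (\<lambda>x. G x a b) L))"
  unfolding sl_as_sum by (rule eqon_sum) auto
lemma sl_diff: "opdiff (\<lambda>a b. sum_list (map (\<lambda>x. F x a b) L)) (\<lambda>a b. sum_list (map (\<lambda>x. G x a b) L))
   = (\<lambda>a b. sum_list (map (\<lambda>x. opdiff (F x) (G x) a b) L))"
  unfolding opdiff_def by (induct L) (auto simp: fun_eq_iff)
lemma sum_diff_op: "opdiff (\<lambda>a b. \<Sum>x\<in>S. F x a b) (\<lambda>a b. \<Sum>x\<in>S. G x a b) = (\<lambda>a b. \<Sum>x\<in>S. opdiff (F x) (G x) a b)"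
  unfolding opdiff_def by (simp add: sum_subtractf)

lemma ketbra_prod: assumes z: "\<forall>q. 0 \<in> Sg q"
  shows "eqon Sg qs (opmult Sg qs (adj (ketbra0 x)) (ketbra0 x)) (\<lambda>a b. if a = x \<and> b = x then 1 else 0)"
proof -
  have z0: "(\<lambda>q. 0) \<in> basis Sg qs" using z unfolding basis_def by auto
  have "opmult Sg qs (adj (ketbra0 x)) (ketbra0 x) a b = (if a = x \<and> b = x then 1 else 0)" for a b
  proof -
    have "opmult Sg qs (adj (ketbra0 x)) (ketbra0 x) a b =
       (\<Sum>w\<in>basis Sg qs. if w = (\<lambda>q. 0) then (if a = x \<and> b = x then 1 else 0) else 0)"
      unfolding opmult_def adj_def ketbra0_def by (intro sum.cong refl) simp
    also have "\<dots> = (if a = x \<and> b = x then 1 else 0)" using z0 by (simp add: sum.delta')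
    finally show ?thesis .
  qed
  then show ?thesis unfolding eqon_def by simp
qed

lemma init_id: assumes z: "\<forall>q. 0 \<in> Sg q"
  shows "eqon Sg UNIV (\<lambda>a b. \<Sum>x\<in>basis Sg qs. sandwich Sg (adj (lift qs (ketbra0 x))) opId a b) opId"
proof -
  let ?P = "\<lambda>x. (\<lambda>a b. if a = x \<and> b = x then 1 else 0) :: ('v,'a) op"
  have step: "eqon Sg UNIV (sandwich Sg (adj (lift qs (ketbra0 x))) opId) (lift qs (?P x))" for x
  proof -
    have a: "eqon Sg UNIV (sandwich Sg (adj (lift qs (ketbra0 x))) opId)
        (opmult Sg UNIV (lift qs (adj (ketbra0 x))) (lift qs (ketbra0 x)))"
      using sandwich_opId[where K="adj (lift qs (ketbra0 x))"] unfolding adj_adj adj_lift .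
    have b: "eqon Sg UNIV (opmult Sg UNIV (lift qs (adj (ketbra0 x))) (lift qs (ketbra0 x)))
        (lift qs (opmult Sg qs (adj (ketbra0 x)) (ketbra0 x)))" by (rule eqon_lift_mult)
    have c: "eqon Sg UNIV (lift qs (opmult Sg qs (adj (ketbra0 x)) (ketbra0 x))) (lift qs (?P x))"
      by (rule lift_cong[OF ketbra_prod[OF z]])
    show ?thesis by (rule eqon_trans[OF eqon_trans[OF a b] c])
  qed
  have a: "eqon Sg UNIV (\<lambda>a b. \<Sum>x\<in>basis Sg qs. sandwich Sg (adj (lift qs (ketbra0 x))) opId a b)
     (\<lambda>a b. \<Sum>x\<in>basis Sg qs. lift qs (?P x) a b)" by (rule eqon_sum[OF step])
  have b: "(\<lambda>a b. \<Sum>x\<in>basis Sg qs. lift qs (?P x) a b) = lift qs (\<lambda>a b. \<Sum>x\<in>basis Sg qs. ?P x a b)"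
    by (rule lift_sum[symmetric])
  have c: "eqon Sg qs (\<lambda>a b. \<Sum>x\<in>basis Sg qs. ?P x a b) opId"
    unfolding eqon_def opId_def
  proof (intro ballI)
    fix a b assume a: "a \<in> basis Sg qs" and b: "b \<in> basis Sg qs"
    have "(\<Sum>x\<in>basis Sg qs. ?P x a b) = (\<Sum>x\<in>basis Sg qs. if x = a then (if a = b then 1 else 0) else 0)"
      by (intro sum.cong refl) auto
    also have "\<dots> = (if a = b then 1 else 0)" using a by (simp add: sum.delta')
    finally show "(\<Sum>x\<in>basis Sg qs. ?P x a b) = (if a = b then 1 else 0)" .
  qed
  have d: "eqon Sg UNIV (lift qs (\<lambda>a b. \<Sum>x\<in>basis Sg qs. ?P x a b)) opId"
    using lift_cong[OF c] unfolding lift_opId .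
  show ?thesis using eqon_trans[OF a[unfolded b] d] .
qed

lemma semok_Init: assumes z: "\<forall>q. 0 \<in> Sg q" shows "semok Sg (Init qs)"
proof -
  let ?L = "\<lambda>x. lift qs (ketbra0 x)"
  have dual: "tr Sg UNIV (opmult Sg UNIV Q (denot Sg (Init qs) \<rho>)) = tr Sg UNIV (opmult Sg UNIV (wp Sg (Init qs) Q) \<rho>)" for Q \<rho>
    unfolding denot.simps wp.simps opmult_sum_right opmult_sum_left tr_sum
    by (intro sum.cong refl dual_sandwich)
  have ps: "psd Sg UNIV (denot Sg (Init qs) \<rho>)" if "psd Sg UNIV \<rho>" for \<rho>
    unfolding denot.simps by (intro psd_sum psd_sandwich' that)
  have pr: "is_pred Sg (wp Sg (Init qs) Q)" if q: "is_pred Sg Q" for Q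
  proof -
    have p1: "psd Sg UNIV (wp Sg (Init qs) Q)"
      unfolding wp.simps using q unfolding is_pred_iff by (intro psd_sum psd_sandwich') blast
    have e: "eqon Sg UNIV (opdiff opId (wp Sg (Init qs) Q))
       (\<lambda>a b. \<Sum>x\<in>basis Sg qs. sandwich Sg (adj (?L x)) (opdiff opId Q) a b)"
      using init_id[OF z, of qs] unfolding wp.simps sandwich_diff sum_diff_op[symmetric]
      by (simp add: eqon_def opdiff_def)
    have p2: "psd Sg UNIV (\<lambda>a b. \<Sum>x\<in>basis Sg qs. sandwich Sg (adj (?L x)) (opdiff opId Q) a b)"
      using q unfolding is_pred_iff by (intro psd_sum psd_sandwich') blast
    show ?thesis unfolding is_pred_iff using p1 psd_eqon[OF e p2] by blast
  qed
  show ?thesis unfolding semok_def using dual ps pr by blast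
qed


lemma psd_sl_minus: "(\<forall>N\<in>set Ms. psd Sg qs N) \<Longrightarrow> M \<in> set Ms \<Longrightarrow>
   psd Sg qs (\<lambda>x y. sum_list (map (\<lambda>N. N x y) Ms) - M x y)"
proof (induct Ms)
  case Nil
  then show ?case by simp
next
  case (Cons N Ns)
  show ?case
  proof (cases "M = N")
    case True
    have "(\<lambda>x y. sum_list (map (\<lambda>N. N x y) (N # Ns)) - M x y) = (\<lambda>x y. sum_list (map (\<lambda>N. N x y) Ns))"
      using True by simp
    moreover have "psd Sg qs (\<lambda>x y. sum_list (map (\<lambda>N. N x y) Ns))" using Cons(2) by (intro psd_sl) auto
    ultimately show ?thesis by simp
  next
    case False
    then have "M \<in> set Ns" using Cons(3) by simp
    then have p: "psd Sg qs (\<lambda>x y. sum_list (map (\<lambda>N. N x y) Ns) - M x y)" using Cons by simp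
    have "(\<lambda>x y. sum_list (map (\<lambda>N. N x y) (N # Ns)) - M x y) = opadd N (\<lambda>x y. sum_list (map (\<lambda>N. N x y) Ns) - M x y)"
      unfolding opadd_def by (simp add: algebra_simps)
    then show ?thesis using psd_add[OF _ p] Cons(2) by simp
  qed
qed

lemma meas_le: assumes m: "measurement Sg qs Ms" and M: "M \<in> set Ms" shows "loewner Sg qs M opId"
proof -
  have p: "psd Sg qs (\<lambda>x y. sum_list (map (\<lambda>N. N x y) Ms) - M x y)"
    using m M psd_sl_minus unfolding measurement_def by blast
  have "eqon Sg qs (opdiff opId M) (\<lambda>x y. sum_list (map (\<lambda>N. N x y) Ms) - M x y)"
    using m unfolding measurement_def eqon_def opdiff_def by simp
  then show ?thesis unfolding loewner_def using psd_eqon p by blast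
qed

lemma meas_psd: "measurement Sg qs Ms \<Longrightarrow> M \<in> set Ms \<Longrightarrow> psd Sg qs M"
  unfolding measurement_def by blast

lemma meas_map_id: assumes "psd Sg qs M" "loewner Sg qs M opId"
  shows "eqon Sg UNIV (meas_map Sg qs M opId) (lift qs M)"
proof -
  have a: "eqon Sg UNIV (meas_map Sg qs M opId) (opmult Sg UNIV (lift qs (opsqrt Sg qs M)) (lift qs (opsqrt Sg qs M)))"
    unfolding meas_map_def using sandwich_opId[where K="lift qs (opsqrt Sg qs M)"] unfolding K_adj[OF assms] .
  show ?thesis by (rule eqon_trans[OF a K_sq[OF assms]])
qed

lemma meas_sum_id: assumes m: "measurement Sg qs (map fst bs)"
  shows "eqon Sg UNIV (\<lambda>a b. sum_list (map (\<lambda>b'. meas_map Sg qs (fst b') opId a b) bs)) opId"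
proof -
  have a: "eqon Sg UNIV (\<lambda>a b. sum_list (map (\<lambda>b'. meas_map Sg qs (fst b') opId a b) bs))
      (\<lambda>a b. sum_list (map (\<lambda>b'. lift qs (fst b') a b) bs))"
  proof (rule eqon_sl)
    fix b' assume "b' \<in> set bs"
    then have "fst b' \<in> set (map fst bs)" by simp
    then show "eqon Sg UNIV (meas_map Sg qs (fst b') opId) (lift qs (fst b'))"
      using meas_map_id meas_le[OF m] meas_psd[OF m] by blast
  qed
  have b: "(\<lambda>a b. sum_list (map (\<lambda>b'. lift qs (fst b') a b) bs)) = lift qs (\<lambda>x y. sum_list (map (\<lambda>M. M x y) (map fst bs)))"
    unfolding lift_sum_list by (simp add: comp_def)
  have c: "eqon Sg qs (\<lambda>x y. sum_list (map (\<lambda>M. M x y) (map fst bs))) opId"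
    using m unfolding measurement_def eqon_def by blast
  have d: "eqon Sg UNIV (lift qs (\<lambda>x y. sum_list (map (\<lambda>M. M x y) (map fst bs)))) opId"
    using lift_cong[OF c] unfolding lift_opId .
  show ?thesis using eqon_trans[OF a[unfolded b] d] .
qed

lemma psd_meas_map: "psd Sg UNIV \<rho> \<Longrightarrow> psd Sg UNIV (meas_map Sg qs M \<rho>)"
  unfolding meas_map_def by (rule psd_sandwich')

lemma meas_dual: assumes "psd Sg qs M" "loewner Sg qs M opId"
  shows "tr Sg UNIV (opmult Sg UNIV Q (meas_map Sg qs M \<rho>)) = tr Sg UNIV (opmult Sg UNIV (meas_map Sg qs M Q) \<rho>)"
  unfolding meas_map_def using dual_sandwich[where K="lift qs (opsqrt Sg qs M)"] unfolding K_adj[OF assms] .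

lemma semok_Case: assumes m: "measurement Sg qs (map fst bs)" and s: "\<forall>b\<in>set bs. semok Sg (snd b)"
  shows "semok Sg (Case qs bs)"
proof -
  have Mp: "psd Sg qs (fst b)" "loewner Sg qs (fst b) opId" if "b \<in> set bs" for b
    using that meas_le[OF m] meas_psd[OF m] by auto
  have dual: "tr Sg UNIV (opmult Sg UNIV Q (denot Sg (Case qs bs) \<rho>)) = tr Sg UNIV (opmult Sg UNIV (wp Sg (Case qs bs) Q) \<rho>)"
    if q: "is_pred Sg Q" and r: "psd Sg UNIV \<rho>" for Q \<rho>
  proof -
    have "tr Sg UNIV (opmult Sg UNIV Q (denot Sg (snd b) (meas_map Sg qs (fst b) \<rho>))) =
          tr Sg UNIV (opmult Sg UNIV (meas_map Sg qs (fst b) (wp Sg (snd b) Q)) \<rho>)" if b: "b \<in> set bs" for b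
      using semok_dual[OF bspec[OF s b] q psd_meas_map[OF r]] meas_dual[OF Mp[OF b]] by simp
    then show ?thesis
      unfolding denot.simps wp.simps opmult_sl_right opmult_sl_left tr_sl
      by (intro arg_cong[where f = sum_list] map_cong refl) blast
  qed
  have ps: "psd Sg UNIV (denot Sg (Case qs bs) \<rho>)" if "psd Sg UNIV \<rho>" for \<rho>
    unfolding denot.simps by (intro psd_sl semok_psd psd_meas_map that) (use s in blast)
  have pr: "is_pred Sg (wp Sg (Case qs bs) Q)" if q: "is_pred Sg Q" for Q
  proof -
    have pw: "is_pred Sg (wp Sg (snd b) Q)" if "b \<in> set bs" for b using semok_pred s that q by blast
    have p1: "psd Sg UNIV (wp Sg (Case qs bs) Q)"
      unfolding wp.simps meas_map_def using pw unfolding is_pred_iff by (intro psd_sl psd_sandwich') blast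
    have e: "eqon Sg UNIV (opdiff opId (wp Sg (Case qs bs) Q))
       (\<lambda>a b. sum_list (map (\<lambda>b'. meas_map Sg qs (fst b') (opdiff opId (wp Sg (snd b') Q)) a b) bs))"
      using meas_sum_id[OF m] unfolding wp.simps meas_map_def sandwich_diff sl_diff[symmetric]
      by (simp add: eqon_def opdiff_def)
    have p2: "psd Sg UNIV (\<lambda>a b. sum_list (map (\<lambda>b'. meas_map Sg qs (fst b') (opdiff opId (wp Sg (snd b') Q)) a b) bs))"
      unfolding meas_map_def using pw unfolding is_pred_iff by (intro psd_sl psd_sandwich') blast
    show ?thesis unfolding is_pred_iff using p1 psd_eqon[OF e p2] by blast
  qed
  show ?thesis unfolding semok_def using dual ps pr by blast
qed

end


definition Rs :: "('v \<Rightarrow> 'a set) \<Rightarrow> 'v set \<Rightarrow> ('v,'a::zero) op \<Rightarrow> ('v,'a) prog \<Rightarrow> ('v,'a) op \<Rightarrow> nat \<Rightarrow> ('v,'a) op" where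
  "Rs Sg qs B S Q n = ((\<lambda>R. wp Sg S (opadd (meas_map Sg qs (opdiff opId B) Q) (meas_map Sg qs B R))) ^^ n) opzero"

lemma wp_While: "wp Sg (While qs B S) Q = opadd (meas_map Sg qs (opdiff opId B) Q)
   (meas_map Sg qs B (\<lambda>x y. lim (\<lambda>n. Rs Sg qs B S Q n x y)))"
  unfolding Rs_def by simp

lemma opadd_0r[simp]: "opadd A opzero = A" unfolding opadd_def opzero_def by simp

lemma Rs_0[simp]: "Rs Sg qs B S Q 0 = opzero" unfolding Rs_def by simp
lemma Rs_Suc: "Rs Sg qs B S Q (Suc n) = wp Sg S (opadd (meas_map Sg qs (opdiff opId B) Q) (meas_map Sg qs B (Rs Sg qs B S Q n)))"
  unfolding Rs_def by simp


context fixes Sg :: "'v::finite \<Rightarrow> 'a::{finite,zero} set" begin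

lemma tr_opmult_sums:
  assumes "\<forall>a\<in>basis Sg UNIV. \<forall>b\<in>basis Sg UNIV. (\<lambda>k. Z k a b) sums D a b"
  shows "(\<lambda>k. tr Sg UNIV (opmult Sg UNIV Q (Z k))) sums tr Sg UNIV (opmult Sg UNIV Q D)"
  unfolding tr_def opmult_def using assms by (intro sums_sum sums_mult) auto

lemma qf_sums:
  assumes "\<forall>a\<in>basis Sg UNIV. \<forall>b\<in>basis Sg UNIV. (\<lambda>k. Z k a b) sums D a b"
  shows "(\<lambda>k. qf Sg UNIV (Z k) \<psi>) sums qf Sg UNIV D \<psi>"
  unfolding qf_def using assms by (intro sums_sum sums_mult sums_mult2) auto

lemma psd_sums:
  assumes "\<forall>a\<in>basis Sg UNIV. \<forall>b\<in>basis Sg UNIV. (\<lambda>k. Z k a b) sums D a b" and p: "\<And>k. psd Sg UNIV (Z k)"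
  shows "psd Sg UNIV D"
  unfolding psd_qf
proof
  fix \<psi>
  have s: "(\<lambda>k. qf Sg UNIV (Z k) \<psi>) sums qf Sg UNIV D \<psi>" by (rule qf_sums[OF assms(1)])
  have z: "\<And>k. Im (qf Sg UNIV (Z k) \<psi>) = 0" "\<And>k. 0 \<le> Re (qf Sg UNIV (Z k) \<psi>)" using p unfolding psd_qf by blast+
  have "(\<lambda>k. Im (qf Sg UNIV (Z k) \<psi>)) sums Im (qf Sg UNIV D \<psi>)" by (rule sums_Im[OF s])
  then have 1: "Im (qf Sg UNIV D \<psi>) = 0" unfolding z using sums_zero sums_unique2 by blast
  have "(\<lambda>k. Re (qf Sg UNIV (Z k) \<psi>)) sums Re (qf Sg UNIV D \<psi>)" by (rule sums_Re[OF s])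
  then have 2: "0 \<le> Re (qf Sg UNIV D \<psi>)" using sums_le[of "\<lambda>k. 0" "\<lambda>k. Re (qf Sg UNIV (Z k) \<psi>)", OF z(2) sums_zero] by blast
  show "Im (qf Sg UNIV D \<psi>) = 0 \<and> 0 \<le> Re (qf Sg UNIV D \<psi>)" using 1 2 by simp
qed

lemma tr_opmult_tendsto:
  assumes "\<forall>x\<in>basis Sg UNIV. \<forall>y\<in>basis Sg UNIV. (\<lambda>n. A n x y) \<longlonglongrightarrow> W x y"
  shows "(\<lambda>n. tr Sg UNIV (opmult Sg UNIV (A n) \<rho>)) \<longlonglongrightarrow> tr Sg UNIV (opmult Sg UNIV W \<rho>)"
  unfolding tr_def opmult_def using assms by (auto intro!: tendsto_sum tendsto_mult)

lemma meas_tendsto: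
  assumes "\<forall>x\<in>basis Sg UNIV. \<forall>y\<in>basis Sg UNIV. (\<lambda>n. R n x y) \<longlonglongrightarrow> L x y"
  shows "\<forall>x\<in>basis Sg UNIV. \<forall>y\<in>basis Sg UNIV. (\<lambda>n. meas_map Sg qs M (R n) x y) \<longlonglongrightarrow> meas_map Sg qs M L x y"
proof (intro ballI)
  fix x y assume x: "x \<in> basis Sg UNIV" and y: "y \<in> basis Sg UNIV"
  let ?K = "lift qs (opsqrt Sg qs M)"
  have c: "\<forall>x\<in>basis Sg UNIV. \<forall>y\<in>basis Sg UNIV. (\<lambda>n. ?K x y) \<longlonglongrightarrow> ?K x y" by simp
  have c2: "\<forall>x\<in>basis Sg UNIV. \<forall>y\<in>basis Sg UNIV. (\<lambda>n. adj ?K x y) \<longlonglongrightarrow> adj ?K x y" by simp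
  have a: "\<forall>x\<in>basis Sg UNIV. \<forall>y\<in>basis Sg UNIV. (\<lambda>n. opmult Sg UNIV ?K (R n) x y) \<longlonglongrightarrow> opmult Sg UNIV ?K L x y"
    using opmult_tendsto[OF c assms] by blast
  show "(\<lambda>n. meas_map Sg qs M (R n) x y) \<longlonglongrightarrow> meas_map Sg qs M L x y"
    unfolding meas_map_def sandwich_def by (rule opmult_tendsto[OF a c2 x y])
qed

lemma diag_le_tr: assumes "psd Sg qs A" "a \<in> basis Sg qs" shows "Re (A a a) \<le> Re (tr Sg qs A)"
proof -
  have "Re (A a a) \<le> (\<Sum>x\<in>basis Sg qs. Re (A x x))"
    by (rule member_le_sum[OF assms(2)]) (use psd_diag[OF assms(1)] in auto)
  then show ?thesis unfolding tr_def by (simp add: Re_sum)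
qed

lemma entry_le_tr: assumes "psd Sg qs A" "a \<in> basis Sg qs" "b \<in> basis Sg qs" shows "cmod (A a b) \<le> Re (tr Sg qs A)"
  using psd_entry[OF assms] diag_le_tr[OF assms(1,2)] diag_le_tr[OF assms(1,3)] by simp

lemma pred_opId: "is_pred Sg opId"
  unfolding is_pred_iff using psd_opId by (simp add: opdiff_def psd_zero[unfolded opzero_def])

end

context fixes Sg :: "'v::finite \<Rightarrow> 'a::{finite,zero} set" and qs :: "'v set" and B :: "('v,'a) op" and S :: "('v,'a) prog"
  assumes bm: "binmeas Sg qs B" and sS: "semok Sg S"
begin

lemma B_psd: "psd Sg qs B" using bm unfolding binmeas_def by (simp add: psd_loewner)
lemma B_le: "loewner Sg qs B opId" using bm unfolding binmeas_def by simp
lemma B0_psd: "psd Sg qs (opdiff opId B)" using B_le unfolding loewner_def .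
lemma B0_le: "loewner Sg qs (opdiff opId B) opId"
proof -
  have "eqon Sg qs (opdiff opId (opdiff opId B)) B" unfolding eqon_def opdiff_def by simp
  then show ?thesis unfolding loewner_def using psd_eqon B_psd by blast
qed

abbreviation "B0 \<equiv> meas_map Sg qs (opdiff opId B)"
abbreviation "B1 \<equiv> meas_map Sg qs B"

lemma B01_id: "eqon Sg UNIV (opadd (B0 opId) (B1 opId)) opId"
proof -
  have a: "eqon Sg UNIV (opadd (B0 opId) (B1 opId)) (opadd (lift qs (opdiff opId B)) (lift qs B))"
    using meas_map_id[OF B0_psd B0_le] meas_map_id[OF B_psd B_le] unfolding eqon_def opadd_def by simp
  have b: "opadd (lift qs (opdiff opId B)) (lift qs B) = lift qs opId"
    unfolding lift_opadd[symmetric] by (rule arg_cong[where f="lift qs"]) (simp add: opadd_def opdiff_def)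
  show ?thesis using a unfolding b lift_opId .
qed

lemma BB_pred: assumes q: "is_pred Sg Q" and r: "is_pred Sg R" shows "is_pred Sg (opadd (B0 Q) (B1 R))"
proof -
  have p1: "psd Sg UNIV (opadd (B0 Q) (B1 R))"
    using q r unfolding is_pred_iff meas_map_def by (intro psd_add psd_sandwich') blast+
  have e: "eqon Sg UNIV (opdiff opId (opadd (B0 Q) (B1 R))) (opadd (B0 (opdiff opId Q)) (B1 (opdiff opId R)))"
    using B01_id unfolding meas_map_def sandwich_diff by (simp add: eqon_def opdiff_def opadd_def algebra_simps)
  have p2: "psd Sg UNIV (opadd (B0 (opdiff opId Q)) (B1 (opdiff opId R)))"
    using q r unfolding is_pred_iff meas_map_def by (intro psd_add psd_sandwich') blast+
  show ?thesis unfolding is_pred_iff using p1 psd_eqon[OF e p2] by blast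
qed

lemma meas_mono: "loewner Sg UNIV R R' \<Longrightarrow> loewner Sg UNIV (meas_map Sg qs M R) (meas_map Sg qs M R')"
  unfolding loewner_def meas_map_def sandwich_diff[symmetric] by (rule psd_sandwich')

lemma opadd_mono: "loewner Sg UNIV A A' \<Longrightarrow> loewner Sg UNIV (opadd C A) (opadd C A')"
proof -
  assume "loewner Sg UNIV A A'"
  moreover have "opdiff (opadd C A') (opadd C A) = opdiff A' A" unfolding opdiff_def opadd_def by simp
  ultimately show ?thesis unfolding loewner_def by simp
qed

lemma T_psd: "psd Sg UNIV \<rho> \<Longrightarrow> psd Sg UNIV (((denot Sg S \<circ> meas_map Sg qs B) ^^ k) \<rho>)"
  by (induct k) (simp_all add: semok_psd[OF sS] psd_meas_map)

context fixes Q assumes q: "is_pred Sg Q"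
begin

lemma Rs_pred: "is_pred Sg (Rs Sg qs B S Q n)"
proof (induct n)
  case 0
  have "psd Sg UNIV (opdiff opId opzero)" using psd_opId by simp
  then show ?case unfolding is_pred_iff by simp
next
  case (Suc n)
  then show ?case unfolding Rs_Suc by (intro semok_pred[OF sS] BB_pred q)
qed

lemma Rs_mono: "loewner Sg UNIV (Rs Sg qs B S Q n) (Rs Sg qs B S Q (Suc n))"
proof (induct n)
  case 0
  show ?case using Rs_pred[of "Suc 0"] unfolding is_pred_def by simp
next
  case (Suc n)
  show ?case unfolding Rs_Suc[of _ _ _ _ _ "Suc n"] Rs_Suc[of _ _ _ _ _ n]
    by (intro semok_mono[OF sS] BB_pred q Rs_pred opadd_mono meas_mono Rs_pred[of "Suc n", unfolded Rs_Suc] Suc[unfolded Rs_Suc])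
qed

lemma Rs_bd: "loewner Sg UNIV (Rs Sg qs B S Q n) opId" using Rs_pred unfolding is_pred_def by blast

definition "Rl = (\<lambda>x y. lim (\<lambda>n. Rs Sg qs B S Q n x y))"

lemma Rs_conv: "\<forall>x\<in>basis Sg UNIV. \<forall>y\<in>basis Sg UNIV. (\<lambda>n. Rs Sg qs B S Q n x y) \<longlonglongrightarrow> Rl x y"
  unfolding Rl_def
  by (rule mono_lim[where R="\<lambda>n. Rs Sg qs B S Q n" and B=opId, OF Rs_mono Rs_bd])
     (use Rs_pred in \<open>auto simp: is_pred_iff\<close>)

lemma Rl_pred: "is_pred Sg Rl"
proof -
  have "psd Sg UNIV Rl" by (rule psd_limit[OF Rs_conv]) (use Rs_pred in \<open>auto simp: is_pred_iff\<close>)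
  moreover have "loewner Sg UNIV Rl opId" by (rule loewner_limit[OF Rs_conv Rs_bd])
  ultimately show ?thesis unfolding is_pred_def by (simp add: psd_loewner)
qed

lemma wpW_pred: "is_pred Sg (wp Sg (While qs B S) Q)"
  unfolding wp_While Rl_def[symmetric] by (rule BB_pred[OF q Rl_pred])


lemma partial: assumes r0: "psd Sg UNIV \<rho>0"
  shows "tr Sg UNIV (opmult Sg UNIV (opadd (B0 Q) (B1 (Rs Sg qs B S Q n))) \<rho>0) =
  (\<Sum>k\<le>n. tr Sg UNIV (opmult Sg UNIV Q (B0 (((denot Sg S \<circ> meas_map Sg qs B) ^^ k) \<rho>0))))"
proof -
  let ?T = "denot Sg S \<circ> meas_map Sg qs B"
  define P where "P = (\<lambda>n. \<forall>\<rho>. psd Sg UNIV \<rho> \<longrightarrow> tr Sg UNIV (opmult Sg UNIV (opadd (B0 Q) (B1 (Rs Sg qs B S Q n))) \<rho>) =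
     (\<Sum>k\<le>n. tr Sg UNIV (opmult Sg UNIV Q (B0 ((?T ^^ k) \<rho>)))))"
  have "P m" for m
  proof (induct m)
    case 0
    show ?case unfolding P_def
    proof (intro allI impI)
      fix \<rho> :: "('v,'a) op" assume r: "psd Sg UNIV \<rho>"
      have "tr Sg UNIV (opmult Sg UNIV (opadd (B0 Q) (B1 opzero)) \<rho>) = tr Sg UNIV (opmult Sg UNIV (B0 Q) \<rho>)"
        unfolding meas_map_def by simp
      also have "\<dots> = tr Sg UNIV (opmult Sg UNIV Q (B0 \<rho>))" by (rule meas_dual[OF B0_psd B0_le, symmetric])
      finally show "tr Sg UNIV (opmult Sg UNIV (opadd (B0 Q) (B1 (Rs Sg qs B S Q 0))) \<rho>) =
         (\<Sum>k\<le>0. tr Sg UNIV (opmult Sg UNIV Q (B0 ((?T ^^ k) \<rho>))))" by simp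
    qed
  next
    case (Suc n)
    show ?case unfolding P_def
    proof (intro allI impI)
      fix \<rho> :: "('v,'a) op" assume r: "psd Sg UNIV \<rho>"
      let ?A = "opadd (B0 Q) (B1 (Rs Sg qs B S Q n))"
      have pA: "is_pred Sg ?A" by (rule BB_pred[OF q Rs_pred])
      have p1: "psd Sg UNIV (B1 \<rho>)" by (rule psd_meas_map[OF r])
      have "tr Sg UNIV (opmult Sg UNIV (opadd (B0 Q) (B1 (Rs Sg qs B S Q (Suc n)))) \<rho>) =
        tr Sg UNIV (opmult Sg UNIV (B0 Q) \<rho>) + tr Sg UNIV (opmult Sg UNIV (B1 (Rs Sg qs B S Q (Suc n))) \<rho>)"
        by (simp add: opmult_add_left tr_add)
      also have "\<dots> = tr Sg UNIV (opmult Sg UNIV Q (B0 \<rho>)) + tr Sg UNIV (opmult Sg UNIV (Rs Sg qs B S Q (Suc n)) (B1 \<rho>))"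
        using meas_dual[OF B0_psd B0_le] meas_dual[OF B_psd B_le] by simp
      also have "tr Sg UNIV (opmult Sg UNIV (Rs Sg qs B S Q (Suc n)) (B1 \<rho>)) = tr Sg UNIV (opmult Sg UNIV ?A (?T \<rho>))"
        unfolding Rs_Suc comp_def by (rule semok_dual[OF sS pA p1, symmetric])
      also have "\<dots> = (\<Sum>k\<le>n. tr Sg UNIV (opmult Sg UNIV Q (B0 ((?T ^^ k) (?T \<rho>)))))"
        using Suc[unfolded P_def] semok_psd[OF sS p1] by (simp add: comp_def)
      also have "\<dots> = (\<Sum>k\<le>n. tr Sg UNIV (opmult Sg UNIV Q (B0 ((?T ^^ Suc k) \<rho>))))"
        by (simp only: funpow_Suc_right comp_def)
      finally show "tr Sg UNIV (opmult Sg UNIV (opadd (B0 Q) (B1 (Rs Sg qs B S Q (Suc n)))) \<rho>) =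
         (\<Sum>k\<le>Suc n. tr Sg UNIV (opmult Sg UNIV Q (B0 ((?T ^^ k) \<rho>))))"
        by (simp only: sum.atMost_Suc_shift funpow_0)
    qed
  qed
  then show ?thesis using r0 unfolding P_def by blast
qed

end

lemma semok_While: "semok Sg (While qs B S)"
proof -
  let ?T = "denot Sg S \<circ> meas_map Sg qs B"
  have main: "psd Sg UNIV (denot Sg (While qs B S) \<rho>) \<and>
     (\<forall>Q. is_pred Sg Q \<longrightarrow> tr Sg UNIV (opmult Sg UNIV Q (denot Sg (While qs B S) \<rho>)) =
        tr Sg UNIV (opmult Sg UNIV (wp Sg (While qs B S) Q) \<rho>))" if r: "psd Sg UNIV \<rho>" for \<rho>
  proof -
    define Y where "Y = (\<lambda>k. B0 ((?T ^^ k) \<rho>))"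
    have pY: "psd Sg UNIV (Y k)" for k unfolding Y_def by (intro psd_meas_map T_psd r)
    define t where "t = (\<lambda>k. Re (tr Sg UNIV (Y k)))"
    have t0: "0 \<le> t k" for k unfolding t_def using psd_tr[OF pY] by blast
    have tb: "(\<Sum>k\<le>n. t k) \<le> Re (tr Sg UNIV \<rho>)" for n
    proof -
      let ?A = "opadd (B0 opId) (B1 (Rs Sg qs B S opId n))"
      have pA: "is_pred Sg ?A" by (rule BB_pred[OF pred_opId Rs_pred[OF pred_opId]])
      have e: "tr Sg UNIV (opmult Sg UNIV opId (B0 ((?T ^^ k) \<rho>))) = tr Sg UNIV (B0 ((?T ^^ k) \<rho>))" for k
        by (rule tr_cong[OF eqon_opId_left])
      have "(\<Sum>k\<le>n. t k) = Re (tr Sg UNIV (opmult Sg UNIV ?A \<rho>))"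
        unfolding partial[OF pred_opId r] t_def Y_def e by (simp add: Re_sum)
      also have "\<dots> \<le> Re (tr Sg UNIV (opmult Sg UNIV opId \<rho>))"
        by (rule tr_diff_pos[OF pA pred_opId _ r]) (use pA in \<open>simp add: is_pred_def\<close>)
      also have "\<dots> = Re (tr Sg UNIV \<rho>)" by (subst tr_cong[OF eqon_opId_left]) simp
      finally show ?thesis .
    qed
    have st: "summable t"
    proof (rule summableI_nonneg_bounded[OF t0])
      fix n show "(\<Sum>i<n. t i) \<le> Re (tr Sg UNIV \<rho>)"
      proof (cases n)
        case 0 then show ?thesis using psd_tr[OF r] by simp
      next
        case (Suc m) then show ?thesis using tb[of m] by (simp add: lessThan_Suc_atMost)
      qed
    qed
    have sums: "\<forall>a\<in>basis Sg UNIV. \<forall>b\<in>basis Sg UNIV. (\<lambda>k. Y k a b) sums denot Sg (While qs B S) \<rho> a b"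
    proof (intro ballI)
      fix a b assume a: "a \<in> basis Sg UNIV" and b: "b \<in> basis Sg UNIV"
      have "summable (\<lambda>k. Y k a b)"
        by (rule summable_comparison_test'[OF st]) (use entry_le_tr[OF pY a b] in \<open>simp add: t_def\<close>)
      then show "(\<lambda>k. Y k a b) sums denot Sg (While qs B S) \<rho> a b"
        unfolding denot.simps Y_def by (simp add: summable_sums)
    qed
    have psdD: "psd Sg UNIV (denot Sg (While qs B S) \<rho>)" by (rule psd_sums[OF sums pY])
    have dual: "tr Sg UNIV (opmult Sg UNIV Q (denot Sg (While qs B S) \<rho>)) =
        tr Sg UNIV (opmult Sg UNIV (wp Sg (While qs B S) Q) \<rho>)" if q: "is_pred Sg Q" for Q
    proof -
      have s1: "(\<lambda>k. tr Sg UNIV (opmult Sg UNIV Q (Y k))) sums tr Sg UNIV (opmult Sg UNIV Q (denot Sg (While qs B S) \<rho>))"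
        by (rule tr_opmult_sums[OF sums])
      have cv: "\<forall>x\<in>basis Sg UNIV. \<forall>y\<in>basis Sg UNIV. (\<lambda>n. opadd (B0 Q) (B1 (Rs Sg qs B S Q n)) x y) \<longlonglongrightarrow> wp Sg (While qs B S) Q x y"
        unfolding wp_While opadd_def using meas_tendsto[OF Rs_conv[OF q]] unfolding Rl_def[OF q]
        by (auto intro!: tendsto_intros)
      have "(\<lambda>n. \<Sum>k\<le>n. tr Sg UNIV (opmult Sg UNIV Q (Y k))) \<longlonglongrightarrow> tr Sg UNIV (opmult Sg UNIV (wp Sg (While qs B S) Q) \<rho>)"
        unfolding Y_def partial[OF q r, symmetric] by (rule tr_opmult_tendsto[OF cv])
      then have s2: "(\<lambda>k. tr Sg UNIV (opmult Sg UNIV Q (Y k))) sums tr Sg UNIV (opmult Sg UNIV (wp Sg (While qs B S) Q) \<rho>)"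
        unfolding sums_def_le .
      show ?thesis using sums_unique2[OF s1 s2] .
    qed
    show ?thesis using psdD dual by blast
  qed
  show ?thesis unfolding semok_def using wpW_pred main by blast
qed

end


lemma snds_eq: "Basic_BNFs.snds b = {snd b}" by (cases b) simp

lemma sem_all:
  fixes Sg :: "'v::finite \<Rightarrow> 'a::{finite,zero} set"
  assumes z: "\<forall>q. 0 \<in> Sg q"
  shows "concrete S \<Longrightarrow> wf_prog Sg S \<Longrightarrow> semok Sg S"
proof (induct S)
  case Skip show ?case by (rule semok_Skip)
next
  case (Init x) show ?case by (rule semok_Init[OF z])
next
  case (Unit x1 x2) then show ?case by (intro semok_Unit) simp
next
  case (Seq x1 x2) then show ?case by (intro semok_Seq) simp_all
next
  case (Repeat x1 x2) then show ?case by (intro semok_Repeat) simp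
next
  case (Case x1 x2)
  show ?case
  proof (rule semok_Case)
    show "measurement Sg x1 (map fst x2)" using Case(3) by simp
    show "\<forall>b\<in>set x2. semok Sg (snd b)"
      using Case by (auto simp: snds_eq)
  qed
next
  case (While x1 x2 x3) then show ?case by (intro semok_While) simp_all
next
  case (Hole x) then show ?case by simp
qed

context fixes Sg :: "'v::finite \<Rightarrow> 'a::{finite,zero} set" begin

lemma rt_seqL: "(refines_tot Sg)\<^sup>*\<^sup>* S S' \<Longrightarrow> (refines_tot Sg)\<^sup>*\<^sup>* (Seq S T) (Seq S' T)"
  by (induct rule: rtranclp_induct) (simp, erule rtranclp.rtrancl_into_rtrancl, erule refines_tot.C_seqL)
lemma rt_seqR: "(refines_tot Sg)\<^sup>*\<^sup>* T T' \<Longrightarrow> (refines_tot Sg)\<^sup>*\<^sup>* (Seq S T) (Seq S T')"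
  by (induct rule: rtranclp_induct) (simp, erule rtranclp.rtrancl_into_rtrancl, erule refines_tot.C_seqR)
lemma rt_repeat: "(refines_tot Sg)\<^sup>*\<^sup>* S S' \<Longrightarrow> (refines_tot Sg)\<^sup>*\<^sup>* (Repeat N S) (Repeat N S')"
  by (induct rule: rtranclp_induct) (simp, erule rtranclp.rtrancl_into_rtrancl, erule refines_tot.C_repeat)
lemma rt_while: "(refines_tot Sg)\<^sup>*\<^sup>* S S' \<Longrightarrow> (refines_tot Sg)\<^sup>*\<^sup>* (While qs B S) (While qs B S')"
  by (induct rule: rtranclp_induct) (simp, erule rtranclp.rtrancl_into_rtrancl, erule refines_tot.C_while)

lemma rt_case1: assumes "(refines_tot Sg)\<^sup>*\<^sup>* S S'" "i < length bs" "snd (bs ! i) = S"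
  shows "(refines_tot Sg)\<^sup>*\<^sup>* (Case qs bs) (Case qs (bs[i := (fst (bs ! i), S')]))"
  using assms(1)
proof (induct rule: rtranclp_induct)
  case base
  have "(fst (bs ! i), S) = bs ! i" using assms(3) by (metis prod.collapse)
  then have "bs[i := (fst (bs ! i), S)] = bs" by simp
  then show ?case by simp
next
  case (step S1 S2)
  let ?bs = "bs[i := (fst (bs ! i), S1)]"
  have li: "i < length ?bs" using assms(2) by simp
  have si: "snd (?bs ! i) = S1" using assms(2) by simp
  have "refines_tot Sg (Case qs ?bs) (Case qs (?bs[i := (fst (?bs ! i), S2)]))"
    by (rule refines_tot.C_case[OF li]) (simp only: si step(2))
  moreover have "?bs[i := (fst (?bs ! i), S2)] = bs[i := (fst (bs ! i), S2)]" using assms(2) by simp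
  ultimately have "refines_tot Sg (Case qs ?bs) (Case qs (bs[i := (fst (bs ! i), S2)]))" by simp
  then show ?case by (rule rtranclp.rtrancl_into_rtrancl[OF step(3)])
qed

lemma rt_case: assumes len: "length cs = length bs" and f: "\<forall>i<length bs. fst (cs ! i) = fst (bs ! i)"
  and r: "\<forall>i<length bs. (refines_tot Sg)\<^sup>*\<^sup>* (snd (cs ! i)) (snd (bs ! i))"
  shows "(refines_tot Sg)\<^sup>*\<^sup>* (Case qs cs) (Case qs bs)"
proof -
  define mix where "mix = (\<lambda>k. map (\<lambda>i. if i < k then bs ! i else cs ! i) [0..<length bs])"
  have m: "k \<le> length bs \<Longrightarrow> (refines_tot Sg)\<^sup>*\<^sup>* (Case qs cs) (Case qs (mix k))" for k
  proof (induct k)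
    case 0
    have "mix 0 = map (\<lambda>i. cs ! i) [0..<length cs]" unfolding mix_def len by simp
    then have "mix 0 = cs" by (simp add: map_nth)
    then show ?case by simp
  next
    case (Suc k)
    then have k: "k < length bs" by simp
    have lm: "length (mix k) = length bs" unfolding mix_def by simp
    have mk: "mix k ! k = cs ! k" unfolding mix_def using k by simp
    have "(refines_tot Sg)\<^sup>*\<^sup>* (Case qs (mix k)) (Case qs ((mix k)[k := (fst (mix k ! k), snd (bs ! k))]))"
      by (rule rt_case1) (use r k lm mk in simp_all)
    moreover have "(mix k)[k := (fst (mix k ! k), snd (bs ! k))] = mix (Suc k)"
    proof (rule nth_equalityI)
      show "length ((mix k)[k := (fst (mix k ! k), snd (bs ! k))]) = length (mix (Suc k))"
        unfolding mix_def by simp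
      fix j assume "j < length ((mix k)[k := (fst (mix k ! k), snd (bs ! k))])"
      then have j: "j < length bs" unfolding mix_def by simp
      show "(mix k)[k := (fst (mix k ! k), snd (bs ! k))] ! j = mix (Suc k) ! j"
      proof (cases "j = k")
        case True
        have "(fst (cs ! k), snd (bs ! k)) = bs ! k" using f k by (metis prod.collapse)
        then show ?thesis using True k lm mk unfolding mix_def by simp
      next
        case False
        then show ?thesis using j lm unfolding mix_def by simp
      qed
    qed
    moreover have "(refines_tot Sg)\<^sup>*\<^sup>* (Case qs cs) (Case qs (mix k))" using Suc by simp
    ultimately show ?case by (metis rtranclp_trans)
  qed
  have "mix (length bs) = map (\<lambda>i. bs ! i) [0..<length bs]" unfolding mix_def by (intro map_cong) auto
  then have "mix (length bs) = bs" by (simp add: map_nth)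
  then show ?thesis using m[of "length bs"] by simp
qed

lemma extend_Some: "extend F J f l' = Some x \<Longrightarrow> \<exists>l j y. j \<in> J \<and> F l = Some y \<and> x = f l j y"
  unfolding extend_def by (auto split: if_splits)

end

definition famok :: "('v \<Rightarrow> 'a set) \<Rightarrow> ('v,'a::zero) fam \<Rightarrow> ('v,'a) prog \<Rightarrow> bool" where
  "famok Sg F S \<longleftrightarrow> (\<forall>l P Q. F l = Some (P,Q) \<longrightarrow> is_pred Sg P \<and> is_pred Sg Q \<and> loewner Sg UNIV P (wp Sg S Q))"

lemma famokD: "famok Sg F S \<Longrightarrow> F l = Some (P,Q) \<Longrightarrow> is_pred Sg P \<and> is_pred Sg Q \<and> loewner Sg UNIV P (wp Sg S Q)"
  unfolding famok_def by blast

lemma pred_iter: fixes Sg :: "'v::finite \<Rightarrow> 'a::{finite,zero} set" shows "semok Sg S \<Longrightarrow> is_pred Sg Q \<Longrightarrow> is_pred Sg ((wp Sg S ^^ m) Q)"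
  by (induct m) (auto intro: semok_pred)

lemma refine_complete:
  fixes Sg :: "'v::finite \<Rightarrow> 'a::{finite,zero} set"
  assumes z: "\<forall>q. 0 \<in> Sg q"
  shows "concrete S \<Longrightarrow> wf_prog Sg S \<Longrightarrow> famok Sg F S \<Longrightarrow> (refines_tot Sg)\<^sup>*\<^sup>* (Hole F) S"
proof (induct S arbitrary: F)
  case Skip
  show ?case
    by (rule r_into_rtranclp, rule refines_tot.H_skip) (use famokD[OF Skip(3)] in simp)
next
  case (Init qs)
  show ?case
    by (rule r_into_rtranclp, rule refines_tot.H_init) (use famokD[OF Init(3)] in simp)
next
  case (Unit qs U)
  show ?case
    by (rule r_into_rtranclp, rule refines_tot.H_unit) (use Unit famokD[OF Unit(3)] in simp_all)
next
  case (Seq S1 S2)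
  have s1: "semok Sg S1" and s2: "semok Sg S2" using sem_all[OF z] Seq by auto
  define R where "R = (\<lambda>l. case F l of Some (P,Q) \<Rightarrow> wp Sg S2 Q | None \<Rightarrow> opzero)"
  have RS: "F l = Some (P,Q) \<Longrightarrow> R l = wp Sg S2 Q" for l P Q unfolding R_def by simp
  let ?F1 = "\<lambda>l. map_option (\<lambda>(P,Q). (P, R l)) (F l)"
  let ?F2 = "\<lambda>l. map_option (\<lambda>(P,Q). (R l, Q)) (F l)"
  have st: "refines_tot Sg (Hole F) (Seq (Hole ?F1) (Hole ?F2))"
  proof (rule refines_tot.H_seq, intro allI impI)
    fix l assume "l \<in> dom F"
    then obtain P Q where "F l = Some (P,Q)" by auto
    then show "is_pred Sg (R l)" using RS semok_pred[OF s2] famokD[OF Seq(5)] by metis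
  qed
  have f1: "famok Sg ?F1 S1" unfolding famok_def
  proof (intro allI impI)
    fix l P' Q' assume "?F1 l = Some (P',Q')"
    then obtain P Q where F: "F l = Some (P,Q)" and e: "P' = P" "Q' = R l" by auto
    show "is_pred Sg P' \<and> is_pred Sg Q' \<and> loewner Sg UNIV P' (wp Sg S1 Q')"
      using famokD[OF Seq(5) F] semok_pred[OF s2] unfolding e RS[OF F] by simp
  qed
  have f2: "famok Sg ?F2 S2" unfolding famok_def
  proof (intro allI impI)
    fix l P' Q' assume "?F2 l = Some (P',Q')"
    then obtain P Q where F: "F l = Some (P,Q)" and e: "P' = R l" "Q' = Q" by auto
    show "is_pred Sg P' \<and> is_pred Sg Q' \<and> loewner Sg UNIV P' (wp Sg S2 Q')"
      using famokD[OF Seq(5) F] semok_pred[OF s2] unfolding e RS[OF F] by simp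
  qed
  have "(refines_tot Sg)\<^sup>*\<^sup>* (Seq (Hole ?F1) (Hole ?F2)) (Seq S1 (Hole ?F2))"
    using Seq(3,4) by (intro rt_seqL Seq(1)[OF _ _ f1]) simp_all
  moreover have "(refines_tot Sg)\<^sup>*\<^sup>* (Seq S1 (Hole ?F2)) (Seq S1 S2)"
    using Seq(3,4) by (intro rt_seqR Seq(2)[OF _ _ f2]) simp_all
  ultimately show ?case using st by (meson converse_rtranclp_into_rtranclp rtranclp_trans)
next
  case (Repeat N S)
  have s: "semok Sg S" using sem_all[OF z] Repeat by auto
  define R where "R = (\<lambda>l j. case F l of Some (P,Q) \<Rightarrow> (wp Sg S ^^ (N - j)) Q | None \<Rightarrow> opzero)"
  have RS: "F l = Some (P,Q) \<Longrightarrow> R l j = (wp Sg S ^^ (N - j)) Q" for l j P Q unfolding R_def by simp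
  let ?F' = "extend F {0..<N} (\<lambda>l j _. (R l j, R l (Suc j)))"
  have st: "refines_tot Sg (Hole F) (Repeat N (Hole ?F'))"
  proof (rule refines_tot.H_repeat)
    show "\<forall>l. l \<in> dom F \<longrightarrow> (\<forall>j\<le>N. is_pred Sg (R l j))"
    proof (intro allI impI)
      fix l j assume "l \<in> dom F" "j \<le> N"
      then obtain P Q where F: "F l = Some (P,Q)" by auto
      have q: "is_pred Sg Q" using famokD[OF Repeat(4) F] by blast
      show "is_pred Sg (R l j)" unfolding RS[OF F] by (rule pred_iter[OF s q])
    qed
    show "\<forall>l P Q. F l = Some (P,Q) \<longrightarrow> loewner Sg UNIV P (R l 0) \<and> loewner Sg UNIV (R l N) Q"
    proof (intro allI impI)
      fix l P Q assume F: "F l = Some (P,Q)"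
      have "loewner Sg UNIV P (wp Sg (Repeat N S) Q)" using famokD[OF Repeat(4) F] by blast
      moreover have "wp Sg (Repeat N S) Q = R l 0" unfolding RS[OF F] by simp
      moreover have "R l N = Q" unfolding RS[OF F] by simp
      ultimately show "loewner Sg UNIV P (R l 0) \<and> loewner Sg UNIV (R l N) Q" by simp
    qed
  qed
  have f: "famok Sg ?F' S" unfolding famok_def
  proof (intro allI impI)
    fix l' P' Q' assume "?F' l' = Some (P',Q')"
    from extend_Some[OF this] obtain l j y where j: "j \<in> {0..<N}" and F: "F l = Some y" and e: "(P',Q') = (R l j, R l (Suc j))"
      by blast
    obtain P Q where y: "y = (P,Q)" by fastforce
    have F': "F l = Some (P,Q)" using F y by simp
    have n: "N - j = Suc (N - Suc j)" using j by simp
    have w: "R l j = wp Sg S (R l (Suc j))" unfolding RS[OF F'] n by simp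
    have q: "is_pred Sg Q" using famokD[OF Repeat(4) F'] by blast
    have p1: "is_pred Sg (R l j)" "is_pred Sg (R l (Suc j))" unfolding RS[OF F'] using pred_iter[OF s q] by blast+
    have e1: "P' = R l j" "Q' = R l (Suc j)" using e by simp_all
    show "is_pred Sg P' \<and> is_pred Sg Q' \<and> loewner Sg UNIV P' (wp Sg S Q')"
      unfolding e1 using p1 w by simp
  qed
  have "(refines_tot Sg)\<^sup>*\<^sup>* (Repeat N (Hole ?F')) (Repeat N S)"
    using Repeat(2,3) by (intro rt_repeat Repeat(1)[OF _ _ f]) simp_all
  then show ?case using st by (meson converse_rtranclp_into_rtranclp)
next
  case (Case qs bs)
  have sb: "semok Sg (snd (bs ! w))" if "w < length bs" for w
    using sem_all[OF z] Case(2,3) that by (simp add: nth_mem)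
  let ?Ms = "map fst bs"
  define Pw where "Pw = (\<lambda>l w. case F l of Some (P,Q) \<Rightarrow> wp Sg (snd (bs ! w)) Q | None \<Rightarrow> opzero)"
  have PS: "F l = Some (P,Q) \<Longrightarrow> Pw l w = wp Sg (snd (bs ! w)) Q" for l w P Q unfolding Pw_def by simp
  let ?Fw = "\<lambda>w l. map_option (\<lambda>(P,Q). (Pw l w, Q)) (F l)"
  let ?cs = "map (\<lambda>w. (?Ms ! w, Hole (?Fw w))) [0..<length ?Ms]"
  have wpc: "wp Sg (Case qs bs) Q = (\<lambda>a b. \<Sum>w<length bs. meas_map Sg qs (fst (bs ! w)) (wp Sg (snd (bs ! w)) Q) a b)" for Q
    unfolding wp.simps by (rule sl_as_sum)
  have st: "refines_tot Sg (Hole F) (Case qs ?cs)"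
  proof (rule refines_tot.H_case)
    show "measurement Sg qs ?Ms" using Case(3) by simp
    show "\<forall>l. l \<in> dom F \<longrightarrow> (\<forall>w<length ?Ms. is_pred Sg (Pw l w))"
    proof (intro allI impI)
      fix l w assume "l \<in> dom F" "w < length ?Ms"
      moreover obtain P Q where F: "F l = Some (P,Q)" using calculation by auto
      have q: "is_pred Sg Q" using famokD[OF Case(4) F] by blast
      have "w < length bs" using calculation by simp
      then show "is_pred Sg (Pw l w)" unfolding PS[OF F] by (rule semok_pred[OF sb q])
    qed
    show "\<forall>l P Q. F l = Some (P,Q) \<longrightarrow> loewner Sg UNIV P (\<lambda>a b. \<Sum>w<length ?Ms. meas_map Sg qs (?Ms ! w) (Pw l w) a b)"
    proof (intro allI impI)
      fix l P Q assume F: "F l = Some (P,Q)"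
      have "(\<lambda>a b. \<Sum>w<length ?Ms. meas_map Sg qs (?Ms ! w) (Pw l w) a b) = wp Sg (Case qs bs) Q"
        unfolding wpc PS[OF F] by simp
      then show "loewner Sg UNIV P (\<lambda>a b. \<Sum>w<length ?Ms. meas_map Sg qs (?Ms ! w) (Pw l w) a b)"
        using famokD[OF Case(4) F] by simp
    qed
  qed
  have "(refines_tot Sg)\<^sup>*\<^sup>* (Case qs ?cs) (Case qs bs)"
  proof (rule rt_case)
    show "length ?cs = length bs" by simp
    show "\<forall>i<length bs. fst (?cs ! i) = fst (bs ! i)" by simp
    show "\<forall>i<length bs. (refines_tot Sg)\<^sup>*\<^sup>* (snd (?cs ! i)) (snd (bs ! i))"
    proof (intro allI impI)
      fix i assume i: "i < length bs"
      have mem: "bs ! i \<in> set bs" using i by simp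
      have fw: "famok Sg (?Fw i) (snd (bs ! i))" unfolding famok_def
      proof (intro allI impI)
        fix l P' Q' assume "?Fw i l = Some (P',Q')"
        then obtain P Q where F: "F l = Some (P,Q)" and e: "P' = Pw l i" "Q' = Q" by auto
        show "is_pred Sg P' \<and> is_pred Sg Q' \<and> loewner Sg UNIV P' (wp Sg (snd (bs ! i)) Q')"
          using famokD[OF Case(4) F] semok_pred[OF sb[OF i]] unfolding e PS[OF F] by simp
      qed
      have "(refines_tot Sg)\<^sup>*\<^sup>* (Hole (?Fw i)) (snd (bs ! i))"
        by (rule Case(1)[OF mem]) (use Case(2,3) mem fw in \<open>auto simp: snds_eq\<close>)
      then show "(refines_tot Sg)\<^sup>*\<^sup>* (snd (?cs ! i)) (snd (bs ! i))" using i by simp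
    qed
  qed
  then show ?case using st by (meson converse_rtranclp_into_rtranclp)
next
  case (While qs B S)
  have bm: "binmeas Sg qs B" using While by simp
  have s: "semok Sg S" using sem_all[OF z] While by auto
  define R where "R = (\<lambda>l n. case F l of Some (P,Q) \<Rightarrow> Rs Sg qs B S Q n | None \<Rightarrow> opzero)"
  have RS: "F l = Some (P,Q) \<Longrightarrow> R l n = Rs Sg qs B S Q n" for l n P Q unfolding R_def by simp
  let ?F' = "extend F UNIV (\<lambda>l n (P,Q). (R l (Suc n), opadd (meas_map Sg qs (opdiff opId B) Q) (meas_map Sg qs B (R l n))))"
  have st: "refines_tot Sg (Hole F) (While qs B (Hole ?F'))"
  proof (rule refines_tot.HT_while[OF bm])
    show "\<forall>l. l \<in> dom F \<longrightarrow> (\<forall>n. is_pred Sg (R l n)) \<and> R l 0 = opzero \<and> (\<forall>n. loewner Sg UNIV (R l n) (R l (Suc n)))"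
    proof (intro allI impI)
      fix l assume "l \<in> dom F"
      then obtain P Q where F: "F l = Some (P,Q)" by auto
      have q: "is_pred Sg Q" using famokD[OF While(4) F] by blast
      show "(\<forall>n. is_pred Sg (R l n)) \<and> R l 0 = opzero \<and> (\<forall>n. loewner Sg UNIV (R l n) (R l (Suc n)))"
        unfolding RS[OF F] using Rs_pred[OF bm s q] Rs_mono[OF bm s q] by simp
    qed
    show "\<forall>l P Q. F l = Some (P,Q) \<longrightarrow> (\<exists>Rlim. (\<forall>x\<in>basis Sg UNIV. \<forall>y\<in>basis Sg UNIV. (\<lambda>n. R l n x y) \<longlonglongrightarrow> Rlim x y) \<and>
          loewner Sg UNIV P (opadd (meas_map Sg qs (opdiff opId B) Q) (meas_map Sg qs B Rlim)))"
    proof (intro allI impI)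
      fix l P Q assume F: "F l = Some (P,Q)"
      have q: "is_pred Sg Q" using famokD[OF While(4) F] by blast
      show "\<exists>Rlim. (\<forall>x\<in>basis Sg UNIV. \<forall>y\<in>basis Sg UNIV. (\<lambda>n. R l n x y) \<longlonglongrightarrow> Rlim x y) \<and>
          loewner Sg UNIV P (opadd (meas_map Sg qs (opdiff opId B) Q) (meas_map Sg qs B Rlim))"
        apply (rule exI[of _ "\<lambda>x y. lim (\<lambda>n. Rs Sg qs B S Q n x y)"])
        using Rs_conv[OF bm s q] famokD[OF While(4) F] unfolding RS[OF F] Rl_def[OF bm s q] wp_While by simp
    qed
  qed
  have f: "famok Sg ?F' S" unfolding famok_def
  proof (intro allI impI)
    fix l' P' Q' assume h: "?F' l' = Some (P',Q')"
    obtain l n y where F: "F l = Some y"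
      and e: "(P',Q') = (case y of (P,Q) \<Rightarrow> (R l (Suc n), opadd (meas_map Sg qs (opdiff opId B) Q) (meas_map Sg qs B (R l n))))"
      using extend_Some[OF h] by blast
    obtain P Q where y: "y = (P,Q)" by fastforce
    have F': "F l = Some (P,Q)" using F y by simp
    have q: "is_pred Sg Q" using famokD[OF While(4) F'] by blast
    have e2: "P' = wp Sg S Q'" "Q' = opadd (meas_map Sg qs (opdiff opId B) Q) (meas_map Sg qs B (Rs Sg qs B S Q n))"
      using e unfolding y RS[OF F'] Rs_Suc by simp_all
    have pq: "is_pred Sg Q'" unfolding e2(2) by (rule BB_pred[OF bm s q Rs_pred[OF bm s q]])
    show "is_pred Sg P' \<and> is_pred Sg Q' \<and> loewner Sg UNIV P' (wp Sg S Q')"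
      using pq semok_pred[OF s pq] unfolding e2(1) by simp
  qed
  have "(refines_tot Sg)\<^sup>*\<^sup>* (While qs B (Hole ?F')) (While qs B S)"
    using While(2,3) by (intro rt_while While(1)[OF _ _ f]) simp_all
  then show ?case using st by (meson converse_rtranclp_into_rtranclp)
next
  case (Hole x)
  then show ?case by simp
qed

theorem mainTheorem4:
  fixes Sg :: "'v::finite \<Rightarrow> 'a::{finite,zero} set"
    and P Q :: "('v,'a) op" and S :: "('v,'a) prog"
  assumes "\<forall>q. 0 \<in> Sg q"
    and "is_pred Sg P" and "is_pred Sg Q"
    and "concrete S" and "wf_prog Sg S"
    and "hoare_tot Sg P S Q"
  shows "(refines_tot Sg)\<^sup>*\<^sup>* (Hole [[] \<mapsto> (P, Q)]) S"
proof -
  have s: "semok Sg S" by (rule sem_all[OF assms(1,4,5)])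
  have le: "loewner Sg UNIV P (wp Sg S Q)"
  proof (rule tr_loewner)
    show "Im (qf Sg UNIV P \<psi>) = 0" for \<psi> by (rule pred_qf_im[OF assms(2)])
    show "Im (qf Sg UNIV (wp Sg S Q) \<psi>) = 0" for \<psi> by (rule pred_qf_im[OF semok_pred[OF s assms(3)]])
    fix \<rho> assume r: "pstate Sg \<rho>"
    then have p: "psd Sg UNIV \<rho>" unfolding pstate_def by blast
    have "Re (tr Sg UNIV (opmult Sg UNIV P \<rho>)) \<le> Re (tr Sg UNIV (opmult Sg UNIV Q (denot Sg S \<rho>)))"
      using assms(6) r unfolding hoare_tot_def trace_tr by blast
    then show "Re (tr Sg UNIV (opmult Sg UNIV P \<rho>)) \<le> Re (tr Sg UNIV (opmult Sg UNIV (wp Sg S Q) \<rho>))"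
      unfolding semok_dual[OF s assms(3) p] .
  qed
  have "famok Sg [[] \<mapsto> (P, Q)] S" unfolding famok_def using assms(2,3) le by auto
  then show ?thesis by (rule refine_complete[OF assms(1,4,5)])
qed


end
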